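(* Let $\mathfrak{g}$ be a Lie algebra over $\mathbb{F}$ with a symmetric invariant bilinear form $\langle\cdot,\cdot\rangle$, and let $\hat{\mathfrak{g}}=\mathfrak{g}\otimes\mathbb{F}[t,t^{-1}]\oplus\mathbb{F}\mathbf{k}$ be the affine Lie algebra with $\mathbf{k}$ central and $[a\otimes t^m,b\otimes t^n]=[a,b]\otimes t^{m+n}+m\langle a,b\rangle\delta_{m+n,0}\mathbf{k}$. Then $\hat{\mathfrak{g}}$ is an $\mathcal{H}$-module Lie algebra with, for $r\in\mathbb{N}$, $a\in\mathfrak{g}$, $n\in\mathbb{Z}$: $L_{-1}^{(r)}\mathbf{k}=L_1^{(r)}\mathbf{k}=L_0^{(r)}\mathbf{k}=\delta_{r,0}\mathbf{k}$, $L_{-1}^{(r)}(a\otimes t^n)=(-1)^r\binom{n}{r}a\otimes t^{n-r}$, $L_1^{(r)}(a\otimes t^n)=\binom{-n}{r}a\otimes t^{n+r}$, $L_0^{(r)}(a\otimes t^n)=\binom{2n}{r}a\otimes t^n$.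
   Context: $\mathbb{F}$ is an algebraically closed field of odd prime characteristic $p$. $\mathcal{H}$: let $\mathfrak{sl}_2$ over $\mathbb{C}$ have basis $L_{-1},L_0,L_1$ with $[L_1,L_{-1}]=2L_0$, $[L_0,L_{\pm1}]=\mp L_{\pm1}$; put $L_{\pm1}^{(n)}=L_{\pm1}^n/n!$, $L_0^{(n)}=\binom{-2L_0}{n}$ in $U(\mathfrak{sl}_2)$; $U(\mathfrak{sl}_2)_{\mathbb{Z}}$ is the $\mathbb{Z}$-span of the $L_{-1}^{(i)}L_0^{(j)}L_1^{(k)}$, and $\mathcal{H}=\mathbb{F}\otimes_{\mathbb{Z}}U(\mathfrak{sl}_2)_{\mathbb{Z}}$, a Hopf algebra with $\Delta(L_{\pm1}^{(n)})=\sum_iL_{\pm1}^{(n-i)}\otimes L_{\pm1}^{(i)}$, $\Delta(L_0^{(n)})=\sum_iL_0^{(n-i)}\otimes L_0^{(i)}$, $\varepsilon(L_{\pm1}^{(n)})=\varepsilon(L_0^{(n)})=\delta_{n,0}$; it is generated as an algebra by the $L_{\pm1}^{(n)}$. For a bialgebra $B$, a $B$-module Lie algebra is a Lie algebra $\mathfrak{a}$ with a $B$-module structure such that $b[u,v]=\sum[b^{(1)}u,b^{(2)}v]$ for $b\in B$, $u,v\in\mathfrak{a}$, where $\Delta(b)=\sum b^{(1)}\otimes b^{(2)}$. *)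

theory Defs
  imports Main "HOL-Computational_Algebra.Polynomial"
begin

text \<open>Elements of U(sl_2)_Q are modelled by their (faithful) action on the direct sum
  of all irreducible finite-dimensional sl_2-modules V(n), n = 0,1,2,...  An element is a
  block-diagonal matrix: u n i j is the (i,j) entry (0 \<le> i,j \<le> n) of its action on V(n),
  with respect to the basis v_0,...,v_n of V(n) (v_j = x^(n-j) y^j).  Entries outside
  0..n are zero for all elements considered.\<close>

type_synonym U = "nat \<Rightarrow> nat \<Rightarrow> nat \<Rightarrow> rat"

definition umult :: "U \<Rightarrow> U \<Rightarrow> U" where
  "umult A B = (\<lambda>n i k. \<Sum>j\<le>n. A n i j * B n j k)"

definition uone :: U where
  "uone = (\<lambda>n i j. if i = j \<and> i \<le> n then 1 else 0)"

definition uadd :: "U \<Rightarrow> U \<Rightarrow> U" where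
  "uadd A B = (\<lambda>n i j. A n i j + B n i j)"

definition uscale :: "rat \<Rightarrow> U \<Rightarrow> U" where
  "uscale c A = (\<lambda>n i j. c * A n i j)"

definition usum :: "'i set \<Rightarrow> ('i \<Rightarrow> U) \<Rightarrow> U" where
  "usum S f = (\<lambda>n i j. \<Sum>s\<in>S. f s n i j)"

definition sl2_e :: U where
  "sl2_e = (\<lambda>n i j. if j \<le> n \<and> j = i + 1 then of_nat j else 0)"

definition sl2_f :: U where
  "sl2_f = (\<lambda>n i j. if i \<le> n \<and> i = j + 1 then of_nat n - of_nat j else 0)"

definition sl2_h :: U where
  "sl2_h = (\<lambda>n i j. if i = j \<and> i \<le> n then of_nat n - 2 * of_nat i else 0)"

text \<open>The basis of the paper: L_1 = e, L_(-1) = -f, L_0 = -h/2; then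
  [L_1,L_(-1)] = 2 L_0 and [L_0,L_(+-1)] = -+ L_(+-1).\<close>

definition L_1 :: U where "L_1 = sl2_e"
definition L_m1 :: U where "L_m1 = uscale (-1) sl2_f"
definition L_0 :: U where "L_0 = uscale (-1/2) sl2_h"

fun upow :: "U \<Rightarrow> nat \<Rightarrow> U" where
  "upow A 0 = uone"
| "upow A (Suc r) = umult (upow A r) A"

fun ufall :: "U \<Rightarrow> nat \<Rightarrow> U" where
  "ufall A 0 = uone"
| "ufall A (Suc r) = umult (ufall A r) (uadd A (uscale (- of_nat r) uone))"

definition L_1_div :: "nat \<Rightarrow> U" where
  "L_1_div r = uscale (1 / fact r) (upow L_1 r)"

definition L_m1_div :: "nat \<Rightarrow> U" where
  "L_m1_div r = uscale (1 / fact r) (upow L_m1 r)"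

definition L_0_div :: "nat \<Rightarrow> U" where
  "L_0_div r = uscale (1 / fact r) (ufall (uscale (-2) L_0) r)"

definition pbw :: "nat \<Rightarrow> nat \<Rightarrow> nat \<Rightarrow> U" where
  "pbw i j k = umult (umult (L_m1_div i) (L_0_div j)) (L_1_div k)"

definition UZ :: "U set" where
  "UZ = {u. \<exists>S c. finite S \<and> u = usum S (\<lambda>m. uscale (of_int (c m)) (case m of (i,j,k) \<Rightarrow> pbw i j k))}"

text \<open>Generalized binomial coefficient binom(n, r) = n(n-1)...(n-r+1)/r! for an integer n
  (an integer; the division is exact).\<close>

definition ibinom :: "int \<Rightarrow> nat \<Rightarrow> int" where
  "ibinom n r = (\<Prod>i<r. n - int i) div fact r"

definition lie_algebra_with_form ::
  "('k::field \<Rightarrow> 'g::ab_group_add \<Rightarrow> 'g) \<Rightarrow> ('g \<Rightarrow> 'g \<Rightarrow> 'g) \<Rightarrow> ('g \<Rightarrow> 'g \<Rightarrow> 'k) \<Rightarrow> bool" where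
  "lie_algebra_with_form scale br B \<longleftrightarrow>
     vector_space scale
   \<and> (\<forall>x y z. br (x + y) z = br x z + br y z)
   \<and> (\<forall>x y z. br x (y + z) = br x y + br x z)
   \<and> (\<forall>c x y. br (scale c x) y = scale c (br x y))
   \<and> (\<forall>c x y. br x (scale c y) = scale c (br x y))
   \<and> (\<forall>x. br x x = 0)
   \<and> (\<forall>x y z. br x (br y z) + br y (br z x) + br z (br x y) = 0)
   \<and> (\<forall>x y z. B (x + y) z = B x z + B y z)
   \<and> (\<forall>x y z. B x (y + z) = B x y + B x z)
   \<and> (\<forall>c x y. B (scale c x) y = c * B x y)
   \<and> (\<forall>c x y. B x (scale c y) = c * B x y)
   \<and> (\<forall>x y. B x y = B y x)
   \<and> (\<forall>x y z. B (br x y) z = B x (br y z))"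

text \<open>Elements of the affine algebra g-hat = g \<otimes> F[t,t^-1] \<oplus> F k: a pair (f, c) with
  f :: int \<Rightarrow> g finitely supported (f n is the coefficient of t^n) and c the coefficient of k.\<close>

type_synonym ('g, 'k) aff = "(int \<Rightarrow> 'g) \<times> 'k"

definition aff_carrier :: "('g::zero, 'k) aff set" where
  "aff_carrier = {x. finite {m. fst x m \<noteq> 0}}"

definition aff_zero :: "('g::zero, 'k::zero) aff" where
  "aff_zero = (\<lambda>_. 0, 0)"

definition aff_add :: "('g::plus, 'k::plus) aff \<Rightarrow> ('g, 'k) aff \<Rightarrow> ('g, 'k) aff" where
  "aff_add x y = (\<lambda>m. fst x m + fst y m, snd x + snd y)"

definition aff_scale :: "('k \<Rightarrow> 'g \<Rightarrow> 'g) \<Rightarrow> 'k::times \<Rightarrow> ('g, 'k) aff \<Rightarrow> ('g, 'k) aff" where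
  "aff_scale scale c x = (\<lambda>m. scale c (fst x m), c * snd x)"

definition aff_sum :: "'i set \<Rightarrow> ('i \<Rightarrow> ('g::comm_monoid_add, 'k::comm_monoid_add) aff) \<Rightarrow> ('g, 'k) aff" where
  "aff_sum S f = (\<lambda>m. \<Sum>s\<in>S. fst (f s) m, \<Sum>s\<in>S. snd (f s))"

definition aff_k :: "('g::zero, 'k::one) aff" where
  "aff_k = (\<lambda>_. 0, 1)"

definition aff_loop :: "'g::zero \<Rightarrow> int \<Rightarrow> ('g, 'k::zero) aff" where
  "aff_loop a n = (\<lambda>m. if m = n then a else 0, 0)"

definition aff_bracket ::
  "('g::{zero,comm_monoid_add} \<Rightarrow> 'g \<Rightarrow> 'g) \<Rightarrow> ('g \<Rightarrow> 'g \<Rightarrow> 'k::ring_1)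
   \<Rightarrow> ('g, 'k) aff \<Rightarrow> ('g, 'k) aff \<Rightarrow> ('g, 'k) aff" where
  "aff_bracket br B x y =
     (\<lambda>m. \<Sum>i\<in>{i. fst x i \<noteq> 0}. br (fst x i) (fst y (m - i)),
      \<Sum>i\<in>{i. fst x i \<noteq> 0}. of_int i * B (fst x i) (fst y (- i)))"

end

theory Submission
  imports Defs "HOL-Computational_Algebra.Formal_Power_Series" "HOL.Binomial_Plus"
begin

lemma sum_if_eq_mult:
  "(\<Sum>z\<le>(N::nat). f z * (if z = c then b else 0)) = (if c \<le> N then f c * b else (0::rat))"
  by (simp add: if_distrib[of "\<lambda>v. f _ * v"] sum.delta cong: if_cong)

lemma L_1_ent: "L_1 N x y = (if y = x + 1 \<and> y \<le> N then of_nat y else 0)"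
  by (auto simp: L_1_def sl2_e_def)

lemma prod_shift1: "(\<Prod>i<Suc r. (of_nat (Suc w)::rat) - of_nat i) = (\<Prod>i<r. of_nat w - of_nat i) * of_nat (Suc w)"
  by (simp only: prod.lessThan_Suc_shift) (simp add: algebra_simps)

lemma upow_L_1: "upow L_1 r N x y = (if y = x + r \<and> y \<le> N then (\<Prod>i<r. of_nat y - of_nat i) else 0)"
proof (induction r arbitrary: y)
  case 0 then show ?case by (auto simp: uone_def)
next
  case (Suc r)
  have "upow L_1 (Suc r) N x y = (\<Sum>z\<le>N. upow L_1 r N x z * L_1 N z y)"
    by (simp add: umult_def)
  also have "\<dots> = (\<Sum>z\<le>N. upow L_1 r N x z * (if z = y - 1 then (if 0 < y \<and> y \<le> N then of_nat y else 0) else 0))"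
    by (rule sum.cong) (auto simp: L_1_ent)
  also have "\<dots> = (if y - 1 \<le> N then upow L_1 r N x (y - 1) * (if 0 < y \<and> y \<le> N then of_nat y else 0) else 0)"
    by (rule sum_if_eq_mult)
  also have "\<dots> = (if y = x + Suc r \<and> y \<le> N then (\<Prod>i<Suc r. of_nat y - of_nat i) else 0)"
  proof (cases "y = 0")
    case True then show ?thesis by simp
  next
    case False
    then obtain w where w: "y = Suc w" by (cases y) auto
    show ?thesis using Suc.IH[of w] prod_shift1[where r=r and w=w] unfolding w by auto
  qed
  finally show ?case .
qed

lemma L_m1_ent: "L_m1 N x y = (if x = y + 1 \<and> x \<le> N then of_nat y - of_nat N else 0)"
  by (auto simp: L_m1_def sl2_f_def uscale_def)

lemma upow_L_m1: "upow L_m1 r N x y = (if x = y + r \<and> x \<le> N then (\<Prod>i<r. of_nat y + of_nat i - of_nat N) else 0)"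
proof (induction r arbitrary: y)
  case 0 then show ?case by (auto simp: uone_def)
next
  case (Suc r)
  have "upow L_m1 (Suc r) N x y = (\<Sum>z\<le>N. upow L_m1 r N x z * L_m1 N z y)"
    by (simp add: umult_def)
  also have "\<dots> = (\<Sum>z\<le>N. upow L_m1 r N x z * (if z = y + 1 then (if y + 1 \<le> N then of_nat y - of_nat N else 0) else 0))"
    by (rule sum.cong) (auto simp: L_m1_ent)
  also have "\<dots> = (if y + 1 \<le> N then upow L_m1 r N x (y + 1) * (if y + 1 \<le> N then of_nat y - of_nat N else 0) else 0)"
    by (rule sum_if_eq_mult)
  also have "\<dots> = (if x = y + Suc r \<and> x \<le> N then (\<Prod>i<Suc r. of_nat y + of_nat i - of_nat N) else 0)"
    using Suc.IH[of "y + 1"]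
    by (auto simp only: prod.lessThan_Suc_shift) (auto simp: algebra_simps)
  finally show ?case .
qed

lemma H_ent: "uscale (-2) L_0 N x y = (if x = y \<and> x \<le> N then of_nat N - 2 * of_nat x else 0)"
  by (auto simp: L_0_def sl2_h_def uscale_def)

lemma ufall_gen:
  assumes H: "\<And>N x y. H N x y = (if x = y \<and> x \<le> N then h N x else 0)"
  shows "ufall H r N x y = (if x = y \<and> x \<le> N then (\<Prod>i<r. h N x - of_nat i) else 0)"
proof (induction r arbitrary: y)
  case 0 then show ?case by (auto simp: uone_def)
next
  case (Suc r)
  have "ufall H (Suc r) N x y = (\<Sum>z\<le>N. ufall H r N x z *
      (if z = y then (if y \<le> N then h N y - of_nat r else 0) else 0))"
    unfolding ufall.simps umult_def by (rule sum.cong) (auto simp: uadd_def uscale_def H uone_def)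
  also have "\<dots> = (if y \<le> N then ufall H r N x y * (if y \<le> N then h N y - of_nat r else 0) else 0)"
    by (rule sum_if_eq_mult)
  also have "\<dots> = (if x = y \<and> x \<le> N then (\<Prod>i<Suc r. h N x - of_nat i) else 0)"
    using Suc.IH[of y] by (auto simp: algebra_simps)
  finally show ?case .
qed

lemma ufall_H: "ufall (uscale (-2) L_0) r N x y = (if x = y \<and> x \<le> N then (\<Prod>i<r. of_nat N - 2 * of_nat x - of_nat i) else 0)"
  by (rule ufall_gen[OF H_ent])

definition ent :: "U \<Rightarrow> int \<Rightarrow> int \<Rightarrow> nat \<Rightarrow> rat" where
  "ent u d m t = u (2*t) (nat (m + int t + d)) (nat (m + int t))"

definition evpoly :: "(nat \<Rightarrow> rat) \<Rightarrow> rat poly \<Rightarrow> bool" where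
  "evpoly f p \<longleftrightarrow> (\<exists>T. \<forall>t\<ge>T. f t = poly p (of_nat t))"

definition Acoef :: "U \<Rightarrow> int \<Rightarrow> int \<Rightarrow> rat" where
  "Acoef u d m = (THE c. \<exists>p. evpoly (ent u d m) p \<and> c = poly p 0)"

definition band :: "int \<Rightarrow> U \<Rightarrow> bool" where
  "band D u \<longleftrightarrow> (\<forall>N x y. D < \<bar>int x - int y\<bar> \<longrightarrow> u N x y = 0)"

definition G :: "U \<Rightarrow> bool" where
  "G u \<longleftrightarrow> (\<exists>D. band D u) \<and> (\<forall>d m. \<exists>p. evpoly (ent u d m) p)
      \<and> (\<forall>d m. Acoef u d m \<in> \<int>) \<and> u 0 0 0 \<in> \<int>"

lemma evpoly_unique:
  assumes "evpoly f p" "evpoly f q" shows "p = q"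
proof (rule ccontr)
  assume ne: "p \<noteq> q"
  from assms obtain T1 T2 where T1: "\<forall>t\<ge>T1. f t = poly p (of_nat t)"
    and T2: "\<forall>t\<ge>T2. f t = poly q (of_nat t)" by (auto simp: evpoly_def)
  have "p - q \<noteq> 0" using ne by simp
  hence fin: "finite {x. poly (p - q) x = 0}" by (rule poly_roots_finite)
  have "(of_nat :: nat \<Rightarrow> rat) ` {max T1 T2..} \<subseteq> {x. poly (p - q) x = 0}"
    using T1 T2 by auto
  hence "finite ((of_nat :: nat \<Rightarrow> rat) ` {max T1 T2..})" using fin finite_subset by blast
  hence "finite {max T1 T2..}"
    using finite_imageD[of "of_nat :: nat \<Rightarrow> rat"] inj_on_def by (metis inj_of_nat inj_on_subset subset_UNIV)
  thus False using infinite_Ici by blast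
qed

lemma Acoef_eq: assumes "evpoly (ent u d m) p" shows "Acoef u d m = poly p 0"
  unfolding Acoef_def
  by (rule the_equality) (use assms evpoly_unique in blast)+

lemma evpoly_cong: "evpoly g p \<Longrightarrow> \<forall>t\<ge>T. f t = g t \<Longrightarrow> evpoly f p"
  unfolding evpoly_def by (metis max.boundedE nat_le_linear max.cobounded1 max.cobounded2 order_trans)

lemma evpoly_const: "evpoly (\<lambda>t. c) [:c:]"
  by (auto simp: evpoly_def)

lemma evpoly_add: "evpoly f p \<Longrightarrow> evpoly g q \<Longrightarrow> evpoly (\<lambda>t. f t + g t) (p + q)"
  unfolding evpoly_def by (metis max.boundedE order_refl poly_add)

lemma evpoly_mult: "evpoly f p \<Longrightarrow> evpoly g q \<Longrightarrow> evpoly (\<lambda>t. f t * g t) (p * q)"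
  unfolding evpoly_def by (metis max.boundedE order_refl poly_mult)

lemma evpoly_smult: "evpoly f p \<Longrightarrow> evpoly (\<lambda>t. c * f t) (smult c p)"
  unfolding evpoly_def by auto

lemma evpoly_sum: "finite S \<Longrightarrow> (\<And>s. s \<in> S \<Longrightarrow> evpoly (f s) (p s)) \<Longrightarrow>
   evpoly (\<lambda>t. \<Sum>s\<in>S. f s t) (\<Sum>s\<in>S. p s)"
proof (induction S rule: finite_induct)
  case empty then show ?case by (auto simp: evpoly_def)
next
  case (insert a S)
  have "evpoly (\<lambda>t. f a t + (\<Sum>s\<in>S. f s t)) (p a + (\<Sum>s\<in>S. p s))"
    using insert by (intro evpoly_add) auto
  then show ?case using insert by simp
qed

lemma band_mono: "band D u \<Longrightarrow> D \<le> D' \<Longrightarrow> band D' u"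
  unfolding band_def by auto

lemma band_Acoef0: assumes "band D u" "D < \<bar>d\<bar>" shows "Acoef u d m = 0"
proof -
  have "evpoly (ent u d m) 0"
    unfolding evpoly_def
  proof (intro exI allI impI)
    fix t assume t: "t \<ge> nat (\<bar>m\<bar> + \<bar>d\<bar>)"
    have "\<bar>int (nat (m + int t + d)) - int (nat (m + int t))\<bar> = \<bar>d\<bar>" using t by auto
    thus "ent u d m t = poly 0 (of_nat t)" using assms by (auto simp: ent_def band_def)
  qed
  thus ?thesis by (simp add: Acoef_eq)
qed

lemma G_evpoly: "G u \<Longrightarrow> \<exists>p. evpoly (ent u d m) p"
  unfolding G_def by blast

lemma G_band: "G u \<Longrightarrow> \<exists>D\<ge>0. band D u"
  unfolding G_def by (meson band_mono max.cobounded1 max.cobounded2)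

lemma ent_uadd: "ent (uadd u v) d m t = ent u d m t + ent v d m t"
  by (simp add: ent_def uadd_def)

lemma ent_uscale: "ent (uscale c u) d m t = c * ent u d m t"
  by (simp add: ent_def uscale_def)

lemma G_uadd: assumes "G u" "G v"
  shows "G (uadd u v)" and "Acoef (uadd u v) d m = Acoef u d m + Acoef v d m"
proof -
  have A: "Acoef (uadd u v) d m = Acoef u d m + Acoef v d m" for d m
  proof -
    obtain p q where p: "evpoly (ent u d m) p" and q: "evpoly (ent v d m) q" using G_evpoly[OF assms(1)] G_evpoly[OF assms(2)] by blast
    have "evpoly (ent (uadd u v) d m) (p + q)" using evpoly_add[OF p q] by (simp add: ent_uadd[abs_def])
    thus ?thesis using p q by (simp add: Acoef_eq)
  qed
  show "Acoef (uadd u v) d m = Acoef u d m + Acoef v d m" by (rule A)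
  obtain D1 D2 where "band D1 u" "band D2 v" using assms by (auto simp: G_def)
  hence "band (max D1 D2) (uadd u v)" by (auto simp: band_def uadd_def)
  moreover have "\<exists>p. evpoly (ent (uadd u v) d m) p" for d m
  proof -
    obtain p q where p: "evpoly (ent u d m) p" and q: "evpoly (ent v d m) q" using G_evpoly[OF assms(1)] G_evpoly[OF assms(2)] by blast
    show ?thesis using evpoly_add[OF p q] by (auto simp: ent_uadd[abs_def])
  qed
  moreover have "Acoef (uadd u v) d m \<in> \<int>" for d m
    unfolding A using assms by (auto simp: G_def)
  moreover have "uadd u v 0 0 0 \<in> \<int>" using assms by (auto simp: G_def uadd_def)
  ultimately show "G (uadd u v)" unfolding G_def by blast
qed

lemma G_uscale: assumes "G u" "c \<in> \<int>"
  shows "G (uscale c u)" and "Acoef (uscale c u) d m = c * Acoef u d m"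
proof -
  have A: "Acoef (uscale c u) d m = c * Acoef u d m" for d m
  proof -
    obtain p where p: "evpoly (ent u d m) p" using G_evpoly[OF assms(1)] by blast
    have "evpoly (ent (uscale c u) d m) (smult c p)" using evpoly_smult[OF p] by (simp add: ent_uscale[abs_def])
    thus ?thesis using p by (simp add: Acoef_eq)
  qed
  show "Acoef (uscale c u) d m = c * Acoef u d m" by (rule A)
  obtain D1 where "band D1 u" using assms by (auto simp: G_def)
  hence "band D1 (uscale c u)" by (auto simp: band_def uscale_def)
  moreover have "\<exists>p. evpoly (ent (uscale c u) d m) p" for d m
  proof -
    obtain p where p: "evpoly (ent u d m) p" using G_evpoly[OF assms(1)] by blast
    show ?thesis using evpoly_smult[OF p] by (auto simp: ent_uscale[abs_def])
  qed
  moreover have "Acoef (uscale c u) d m \<in> \<int>" for d m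
    unfolding A using assms by (auto simp: G_def)
  moreover have "uscale c u 0 0 0 \<in> \<int>" using assms by (auto simp: G_def uscale_def)
  ultimately show "G (uscale c u)" unfolding G_def by blast
qed

lemma G_zero: "G (\<lambda>n i j. 0)"
proof -
  have E: "evpoly (ent (\<lambda>n i j. 0) d m) 0" for d m by (auto simp: evpoly_def ent_def)
  have "Acoef (\<lambda>n i j. 0) d m = 0" for d m using Acoef_eq[OF E] by simp
  moreover have "\<exists>p. evpoly (ent (\<lambda>n i j. 0) d m) p" for d m using E by blast
  ultimately show ?thesis unfolding G_def band_def by simp
qed

lemma G_usum: "finite S \<Longrightarrow> (\<And>s. s \<in> S \<Longrightarrow> G (f s)) \<Longrightarrow> G (usum S f)"
proof (induction S rule: finite_induct)
  case empty then show ?case using G_zero by (simp add: usum_def)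
next
  case (insert a S)
  have "usum (insert a S) f = uadd (f a) (usum S f)"
    using insert by (simp add: usum_def uadd_def)
  then show ?case using insert G_uadd(1) by auto
qed

lemma ent_umult:
  assumes bv: "band Dv v" and Dv: "0 \<le> Dv" and t: "t \<ge> nat (\<bar>m\<bar> + Dv)"
  shows "ent (umult u v) d m t = (\<Sum>e\<in>{-Dv..Dv}. ent u (d - e) (m + e) t * ent v e m t)"
proof -
  define g where "g e = nat (m + int t + e)" for e
  define Y where "Y = nat (m + int t)"
  have Y: "int Y = m + int t" using t Dv by (simp add: Y_def)
  have inj: "inj_on g {-Dv..Dv}" using t by (auto simp: inj_on_def g_def)
  have sub: "g ` {-Dv..Dv} \<subseteq> {..2*t}" using t by (auto simp: g_def)
  have "ent (umult u v) d m t = (\<Sum>z\<le>2*t. u (2*t) (nat (m + int t + d)) z * v (2*t) z Y)"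
    by (simp add: ent_def umult_def Y_def)
  also have "\<dots> = (\<Sum>z\<in>g ` {-Dv..Dv}. u (2*t) (nat (m + int t + d)) z * v (2*t) z Y)"
  proof (rule sum.mono_neutral_right[OF _ sub])
    show "\<forall>z\<in>{..2 * t} - g ` {- Dv..Dv}. u (2 * t) (nat (m + int t + d)) z * v (2 * t) z Y = 0"
    proof
      fix z assume z: "z \<in> {..2 * t} - g ` {- Dv..Dv}"
      have "Dv < \<bar>int z - int Y\<bar>"
      proof (rule ccontr)
        assume "\<not> Dv < \<bar>int z - int Y\<bar>"
        hence "int z - int Y \<in> {-Dv..Dv}" by auto
        moreover have "g (int z - int Y) = z" using Y by (simp add: g_def)
        ultimately show False using z by (metis DiffD2 imageI)
      qed
      thus "u (2 * t) (nat (m + int t + d)) z * v (2 * t) z Y = 0" using bv by (simp add: band_def)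
    qed
  qed simp
  also have "\<dots> = (\<Sum>e\<in>{-Dv..Dv}. u (2*t) (nat (m + int t + d)) (g e) * v (2*t) (g e) Y)"
    by (rule sum.reindex_cong[OF inj refl]) simp
  also have "\<dots> = (\<Sum>e\<in>{-Dv..Dv}. ent u (d - e) (m + e) t * ent v e m t)"
  proof (rule sum.cong[OF refl])
    fix e assume "e \<in> {-Dv..Dv}"
    have 1: "m + e + int t + (d - e) = m + int t + d" by simp
    have 2: "m + e + int t = m + int t + e" by simp
    show "u (2*t) (nat (m + int t + d)) (g e) * v (2*t) (g e) Y = ent u (d - e) (m + e) t * ent v e m t"
      unfolding ent_def 2 g_def Y_def by (simp add: add.assoc)
  qed
  finally show ?thesis .
qed

lemma G_umult_Acoef:
  assumes "G u" "G v" "band Dv v" "0 \<le> Dv"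
  shows "evpoly (ent (umult u v) d m) (\<Sum>e\<in>{-Dv..Dv}. (SOME p. evpoly (ent u (d - e) (m + e)) p) * (SOME p. evpoly (ent v e m) p))"
    and "Acoef (umult u v) d m = (\<Sum>e\<in>{-Dv..Dv}. Acoef u (d - e) (m + e) * Acoef v e m)"
proof -
  have pu: "evpoly (ent u d' m') (SOME p. evpoly (ent u d' m') p)" for d' m'
    using assms(1) unfolding G_def by (metis someI_ex)
  have pv: "evpoly (ent v d' m') (SOME p. evpoly (ent v d' m') p)" for d' m'
    using assms(2) unfolding G_def by (metis someI_ex)
  have "evpoly (\<lambda>t. \<Sum>e\<in>{-Dv..Dv}. ent u (d - e) (m + e) t * ent v e m t)
     (\<Sum>e\<in>{-Dv..Dv}. (SOME p. evpoly (ent u (d - e) (m + e)) p) * (SOME p. evpoly (ent v e m) p))"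
    by (rule evpoly_sum) (auto intro: evpoly_mult pu pv)
  thus E: "evpoly (ent (umult u v) d m) (\<Sum>e\<in>{-Dv..Dv}. (SOME p. evpoly (ent u (d - e) (m + e)) p) * (SOME p. evpoly (ent v e m) p))"
    by (rule evpoly_cong[where T="nat (\<bar>m\<bar> + Dv)"]) (use ent_umult[OF assms(3,4)] in blast)
  show "Acoef (umult u v) d m = (\<Sum>e\<in>{-Dv..Dv}. Acoef u (d - e) (m + e) * Acoef v e m)"
    using Acoef_eq[OF E] Acoef_eq[OF pu] Acoef_eq[OF pv] by (simp add: poly_sum)
qed

lemma G_umult: assumes "G u" "G v" shows "G (umult u v)"
proof -
  obtain Du where Du: "band Du u" "0 \<le> Du" using G_band[OF assms(1)] by auto
  obtain Dv where Dv: "band Dv v" "0 \<le> Dv" using G_band[OF assms(2)] by auto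
  have "band (Du + Dv) (umult u v)"
    unfolding band_def umult_def
  proof (intro allI impI sum.neutral ballI)
    fix N x y z assume "Du + Dv < \<bar>int x - int y\<bar>"
    hence "Du < \<bar>int x - int z\<bar> \<or> Dv < \<bar>int z - int y\<bar>" by auto
    thus "u N x z * v N z y = 0" using Du Dv by (auto simp: band_def)
  qed
  moreover have "Acoef (umult u v) d m \<in> \<int>" for d m
    using G_umult_Acoef(2)[OF assms Dv] assms by (auto simp: G_def intro!: Ints_sum Ints_mult)
  moreover have "umult u v 0 0 0 \<in> \<int>" using assms by (auto simp: G_def umult_def)
  moreover have "\<exists>p. evpoly (ent (umult u v) d m) p" for d m using G_umult_Acoef(1)[OF assms Dv] by blast
  ultimately show ?thesis by (auto simp: G_def)
qed

lemma L_1_div_ent: "L_1_div r N x y = (if y = x + r \<and> y \<le> N then (\<Prod>i<r. of_nat y - of_nat i) / fact r else 0)"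
  by (simp add: L_1_div_def uscale_def upow_L_1)

lemma L_m1_div_ent: "L_m1_div r N x y = (if x = y + r \<and> x \<le> N then (\<Prod>i<r. of_nat y + of_nat i - of_nat N) / fact r else 0)"
  by (simp add: L_m1_div_def uscale_def upow_L_m1)

lemma L_0_div_ent: "L_0_div r N x y = (if x = y \<and> x \<le> N then (\<Prod>i<r. of_nat N - 2 * of_nat x - of_nat i) / fact r else 0)"
  by (simp add: L_0_div_def uscale_def[of "1 / fact r"] ufall_H)

lemma of_int_ibinom: "(of_int (ibinom n r) :: rat) = of_int n gchoose r"
  using of_int_gbinomial[of n r] gbinomial_prod_rev[of n r] by (simp add: ibinom_def atLeast0LessThan)

lemma rat_gchoose: "(\<Prod>i<r. (of_int m :: rat) - of_nat i) / fact r = of_int (ibinom m r)"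
  by (simp add: of_int_ibinom gbinomial_prod_rev atLeast0LessThan)

lemma prod_neg_shift: "(\<Prod>i<r. (a::rat) + of_nat i) = (-1)^r * (\<Prod>i<r. -a - of_nat i)"
  by (induction r) (auto simp: algebra_simps)

definition pA :: "int \<Rightarrow> nat \<Rightarrow> rat poly" where
  "pA m r = smult (1 / fact r) (\<Prod>i<r. [:of_int m - of_nat i, 1:])"
definition pB :: "int \<Rightarrow> nat \<Rightarrow> rat poly" where
  "pB m r = smult (1 / fact r) (\<Prod>i<r. [:of_int m + of_nat i, -1:])"

lemma poly_pA: "poly (pA m r) x = (\<Prod>i<r. of_int m - of_nat i + x) / fact r"
  by (simp add: pA_def poly_prod)
lemma poly_pB: "poly (pB m r) x = (\<Prod>i<r. of_int m + of_nat i - x) / fact r"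
  by (simp add: pB_def poly_prod)

lemma nat_facts:
  assumes "t \<ge> nat (\<bar>m\<bar> + \<bar>d\<bar>)"
  shows "int (nat (m + int t + d)) = m + int t + d" "int (nat (m + int t)) = m + int t"
    "(of_nat (nat (m + int t)) :: rat) = of_int m + of_nat t"
    "nat (m + int t) \<le> 2 * t" "nat (m + int t + d) \<le> 2 * t"
  using assms by auto

lemma ent_L_1_div: assumes t: "t \<ge> nat (\<bar>m\<bar> + \<bar>d\<bar>)"
  shows "ent (L_1_div r) d m t = (if d = - int r then poly (pA m r) (of_nat t) else 0)"
proof -
  note nf = nat_facts[OF t]
  have iff: "nat (m + int t) = nat (m + int t + d) + r \<longleftrightarrow> d = - int r" using nf(1,2) by linarith
  show ?thesis
    unfolding ent_def L_1_div_ent iff poly_pA using nf(4)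
    by (auto simp: nf(3) algebra_simps)
qed

lemma ent_L_m1_div: assumes t: "t \<ge> nat (\<bar>m\<bar> + \<bar>d\<bar>)"
  shows "ent (L_m1_div r) d m t = (if d = int r then poly (pB m r) (of_nat t) else 0)"
proof -
  note nf = nat_facts[OF t]
  have iff: "nat (m + int t + d) = nat (m + int t) + r \<longleftrightarrow> d = int r" using nf(1,2) by linarith
  show ?thesis
    unfolding ent_def L_m1_div_ent iff poly_pB using nf(5)
    by (auto simp: nf(3) algebra_simps)
qed

lemma ent_L_0_div: assumes t: "t \<ge> nat (\<bar>m\<bar> + \<bar>d\<bar>)"
  shows "ent (L_0_div r) d m t = (if d = 0 then (\<Prod>i<r. of_int (- 2 * m) - of_nat i) / fact r else 0)"
proof -
  note nf = nat_facts[OF t]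
  have iff: "nat (m + int t + d) = nat (m + int t) \<longleftrightarrow> d = 0" using nf(1,2) by linarith
  show ?thesis
    unfolding ent_def L_0_div_ent iff using nf(4)
    by (auto simp: nf(3) algebra_simps)
qed

lemma evp_L_1_div: "evpoly (ent (L_1_div r) d m) (if d = - int r then pA m r else 0)"
  unfolding evpoly_def by (rule exI[of _ "nat (\<bar>m\<bar> + \<bar>d\<bar>)"]) (auto simp: ent_L_1_div)

lemma evp_L_m1_div: "evpoly (ent (L_m1_div r) d m) (if d = int r then pB m r else 0)"
  unfolding evpoly_def by (rule exI[of _ "nat (\<bar>m\<bar> + \<bar>d\<bar>)"]) (auto simp: ent_L_m1_div)

lemma evp_L_0_div: "evpoly (ent (L_0_div r) d m) [:if d = 0 then (\<Prod>i<r. of_int (- 2 * m) - of_nat i) / fact r else 0:]"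
  unfolding evpoly_def by (rule exI[of _ "nat (\<bar>m\<bar> + \<bar>d\<bar>)"]) (auto simp: ent_L_0_div)

lemma Acoef_L_1_div: "Acoef (L_1_div r) d m = (if d = - int r then of_int (ibinom m r) else 0)"
  using Acoef_eq[OF evp_L_1_div] by (simp add: poly_pA rat_gchoose)

lemma Acoef_L_m1_div: "Acoef (L_m1_div r) d m = (if d = int r then of_int ((-1)^r * ibinom (- m) r) else 0)"
proof -
  have "(\<Prod>i<r. (of_int m :: rat) + of_nat i) / fact r = of_int ((-1)^r * ibinom (- m) r)"
    unfolding prod_neg_shift using rat_gchoose[of "- m" r] by (simp add: times_divide_eq_right[symmetric] del: times_divide_eq_right)
  thus ?thesis using Acoef_eq[OF evp_L_m1_div] by (simp add: poly_pB)
qed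

lemma Acoef_L_0_div: "Acoef (L_0_div r) d m = (if d = 0 then of_int (ibinom (- 2 * m) r) else 0)"
  using Acoef_eq[OF evp_L_0_div] rat_gchoose[of "- 2 * m" r] by simp

lemma L_1_div_000: "L_1_div r 0 0 0 = (if r = 0 then 1 else 0)"
  by (simp add: L_1_div_ent)
lemma L_m1_div_000: "L_m1_div r 0 0 0 = (if r = 0 then 1 else 0)"
  by (simp add: L_m1_div_ent)
lemma L_0_div_000: "L_0_div r 0 0 0 = (if r = 0 then 1 else 0)"
  by (cases r) (simp_all add: L_0_div_ent prod.lessThan_Suc_shift, arith)

lemma G_L_1_div: "G (L_1_div r)"
proof -
  have "band (int r) (L_1_div r)" by (auto simp: band_def L_1_div_ent)
  moreover have "\<exists>p. evpoly (ent (L_1_div r) d m) p" for d m using evp_L_1_div by blast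
  ultimately show ?thesis by (auto simp: G_def Acoef_L_1_div L_1_div_000)
qed

lemma G_L_m1_div: "G (L_m1_div r)"
proof -
  have "band (int r) (L_m1_div r)" by (auto simp: band_def L_m1_div_ent)
  moreover have "\<exists>p. evpoly (ent (L_m1_div r) d m) p" for d m using evp_L_m1_div by blast
  ultimately show ?thesis by (auto simp: G_def Acoef_L_m1_div L_m1_div_000 simp del: of_int_mult of_int_power)
qed

lemma G_L_0_div: "G (L_0_div r)"
proof -
  have "band 0 (L_0_div r)" by (auto simp: band_def L_0_div_ent)
  moreover have "\<exists>p. evpoly (ent (L_0_div r) d m) p" for d m using evp_L_0_div by blast
  ultimately show ?thesis by (auto simp: G_def Acoef_L_0_div L_0_div_000)
qed

lemma G_pbw: "G (pbw i j k)"
  by (simp add: pbw_def G_umult G_L_1_div G_L_m1_div G_L_0_div)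

lemma G_UZ: "u \<in> UZ \<Longrightarrow> G u"
  unfolding UZ_def by (auto intro!: G_usum G_uscale(1) G_pbw split: prod.splits)

lemma ent_uone: "t \<ge> nat (\<bar>m\<bar> + \<bar>d\<bar>) \<Longrightarrow> ent uone d m t = (if d = 0 then 1 else 0)"
  using nat_facts[of m d t] by (auto simp: ent_def uone_def)

lemma evp_uone: "evpoly (ent uone d m) [:if d = 0 then 1 else 0:]"
  unfolding evpoly_def by (rule exI[of _ "nat (\<bar>m\<bar> + \<bar>d\<bar>)"]) (auto simp: ent_uone)

lemma Acoef_uone: "Acoef uone d m = (if d = 0 then 1 else 0)"
  using Acoef_eq[OF evp_uone] by simp

lemma G_uone: "G uone"
proof -
  have "band 0 uone" by (auto simp: band_def uone_def)
  moreover have "\<exists>p. evpoly (ent uone d m) p" for d m using evp_uone by blast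
  moreover have "Acoef uone d m \<in> \<int>" for d m by (simp add: Acoef_uone)
  moreover have "uone 0 0 0 \<in> \<int>" by (simp add: uone_def)
  ultimately show ?thesis unfolding G_def by blast
qed

definition kap :: "U \<Rightarrow> int \<Rightarrow> int \<Rightarrow> 'k::ring_1" where
  "kap u n' n = of_int \<lfloor>Acoef u (n - n') (- n)\<rfloor>"

definition rho :: "('k::ring_1 \<Rightarrow> 'g::ab_group_add \<Rightarrow> 'g) \<Rightarrow> U \<Rightarrow> ('g, 'k) aff \<Rightarrow> ('g, 'k) aff" where
  "rho sc u x = (\<lambda>n'. \<Sum>n\<in>{n. fst x n \<noteq> 0}. sc (kap u n' n) (fst x n), of_int \<lfloor>u 0 0 0\<rfloor> * snd x)"

definition win :: "int set \<Rightarrow> int \<Rightarrow> int set" where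
  "win S D = (\<Union>n\<in>S. {n - D..n + D})"

lemma finite_win: "finite S \<Longrightarrow> finite (win S D)"
  by (simp add: win_def)

lemma floor_add_Ints: "a \<in> \<int> \<Longrightarrow> b \<in> \<int> \<Longrightarrow> \<lfloor>a + b\<rfloor> = \<lfloor>a\<rfloor> + \<lfloor>(b::rat)\<rfloor>"
  by (auto elim!: Ints_cases)

lemma floor_mult_Ints: "a \<in> \<int> \<Longrightarrow> b \<in> \<int> \<Longrightarrow> \<lfloor>a * b\<rfloor> = \<lfloor>a\<rfloor> * \<lfloor>(b::rat)\<rfloor>"
  by (auto elim!: Ints_cases simp flip: of_int_mult)

lemma floor_sum_Ints: "(\<And>i. i \<in> S \<Longrightarrow> a i \<in> \<int>) \<Longrightarrow> \<lfloor>\<Sum>i\<in>S. a i\<rfloor> = (\<Sum>i\<in>S. \<lfloor>(a i::rat)\<rfloor>)"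
proof (induction S rule: infinite_finite_induct)
  case (insert x F)
  then show ?case by (simp add: floor_add_Ints Ints_sum)
qed auto

lemma kap_zero: "band D u \<Longrightarrow> D < \<bar>n - n'\<bar> \<Longrightarrow> kap u n' n = 0"
  by (simp add: kap_def band_Acoef0)

lemma kap_uadd: "G u \<Longrightarrow> G v \<Longrightarrow> kap (uadd u v) n' n = kap u n' n + kap v n' n"
  by (simp add: kap_def G_uadd(2) floor_add_Ints G_def)

lemma kap_uone: "kap uone n' n = (if n = n' then 1 else 0)"
  by (simp add: kap_def Acoef_uone)

lemma kap_umult:
  assumes "G u" "G v" "band Dv v" "0 \<le> Dv" "finite S'" "{n - Dv..n + Dv} \<subseteq> S'"
  shows "kap (umult u v) n'' n = (\<Sum>n'\<in>S'. kap u n'' n' * kap v n' n)"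
proof -
  have Iu: "Acoef u d m \<in> \<int>" and Iv: "Acoef v d m \<in> \<int>" for d m using assms(1,2) by (auto simp: G_def)
  have "Acoef (umult u v) (n - n'') (- n) = (\<Sum>e\<in>{-Dv..Dv}. Acoef u (n - n'' - e) (- n + e) * Acoef v e (- n))"
    by (rule G_umult_Acoef(2)[OF assms(1-4)])
  also have "\<dots> = (\<Sum>n'\<in>{n - Dv..n + Dv}. Acoef u (n' - n'') (- n') * Acoef v (n - n') (- n))"
  proof (rule sum.reindex_bij_witness[where i="\<lambda>n'. n - n'" and j="\<lambda>e. n - e"])
  qed (auto simp: algebra_simps)
  finally have "\<lfloor>Acoef (umult u v) (n - n'') (- n)\<rfloor> = (\<Sum>n'\<in>{n - Dv..n + Dv}. \<lfloor>Acoef u (n' - n'') (- n')\<rfloor> * \<lfloor>Acoef v (n - n') (- n)\<rfloor>)"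
    by (simp add: floor_sum_Ints Iu Iv floor_mult_Ints Ints_mult)
  hence "kap (umult u v) n'' n = (\<Sum>n'\<in>{n - Dv..n + Dv}. kap u n'' n' * kap v n' n)"
    by (simp add: kap_def)
  also have "\<dots> = (\<Sum>n'\<in>S'. kap u n'' n' * kap v n' n)"
  proof (rule sum.mono_neutral_left[OF assms(5,6)])
    show "\<forall>i\<in>S' - {n - Dv..n + Dv}. kap u n'' i * kap v i n = 0"
    proof
      fix i assume "i \<in> S' - {n - Dv..n + Dv}"
      hence "Dv < \<bar>n - i\<bar>" by auto
      thus "kap u n'' i * kap v i n = 0" by (simp add: kap_zero[OF assms(3)])
    qed
  qed
  finally show ?thesis .
qed

lemma rho_snd: "snd (rho sc u x) = of_int \<lfloor>u 0 0 0\<rfloor> * snd x"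
  by (simp add: rho_def)

context vector_space
begin

lemma rho_fst_superset:
  assumes "finite S" "{n. fst x n \<noteq> 0} \<subseteq> S"
  shows "fst (rho scale u x) n' = (\<Sum>n\<in>S. scale (kap u n' n) (fst x n))"
  unfolding rho_def fst_conv by (rule sum.mono_neutral_left[OF assms]) auto

lemma rho_supp:
  assumes "band D u"
  shows "{n'. fst (rho scale u x) n' \<noteq> 0} \<subseteq> win {n. fst x n \<noteq> 0} D"
proof
  fix n' assume "n' \<in> {n'. fst (rho scale u x) n' \<noteq> 0}"
  hence sne: "(\<Sum>n\<in>{n. fst x n \<noteq> 0}. scale (kap u n' n) (fst x n)) \<noteq> 0" by (simp add: rho_def)
  have "\<exists>n\<in>{n. fst x n \<noteq> 0}. scale (kap u n' n) (fst x n) \<noteq> 0"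
  proof (rule ccontr)
    assume "\<not> (\<exists>n\<in>{n. fst x n \<noteq> 0}. scale (kap u n' n) (fst x n) \<noteq> 0)"
    hence "\<forall>n\<in>{n. fst x n \<noteq> 0}. scale (kap u n' n) (fst x n) = 0" by blast
    hence "(\<Sum>n\<in>{n. fst x n \<noteq> 0}. scale (kap u n' n) (fst x n)) = 0" by (rule sum.neutral)
    thus False using sne by simp
  qed
  then obtain n where n: "fst x n \<noteq> 0" "scale (kap u n' n) (fst x n) \<noteq> 0"
    by auto
  have "(kap u n' n :: 'a) \<noteq> 0" using n(2) by (metis scale_zero_left)
  hence "\<bar>n - n'\<bar> \<le> D" by (metis kap_zero[OF assms] not_le)
  hence "n' \<in> {n - D..n + D}" by auto
  thus "n' \<in> win {n. fst x n \<noteq> 0} D" unfolding win_def using n(1) by blast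
qed

lemma rho_carrier: "G u \<Longrightarrow> x \<in> aff_carrier \<Longrightarrow> rho scale u x \<in> aff_carrier"
  using rho_supp finite_win finite_subset unfolding aff_carrier_def G_def by (metis mem_Collect_eq)

lemma rho_add:
  assumes "x \<in> aff_carrier" "y \<in> aff_carrier"
  shows "rho scale u (aff_add x y) = aff_add (rho scale u x) (rho scale u y)"
proof -
  let ?S = "{n. fst x n \<noteq> 0} \<union> {n. fst y n \<noteq> 0}"
  have fin: "finite ?S" using assms by (simp add: aff_carrier_def)
  have "fst (rho scale u (aff_add x y)) n' = fst (rho scale u x) n' + fst (rho scale u y) n'" for n'
  proof -
    have "fst (rho scale u (aff_add x y)) n' = (\<Sum>n\<in>?S. scale (kap u n' n) (fst (aff_add x y) n))"
      by (rule rho_fst_superset[OF fin]) (auto simp: aff_add_def)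
    also have "\<dots> = (\<Sum>n\<in>?S. scale (kap u n' n) (fst x n)) + (\<Sum>n\<in>?S. scale (kap u n' n) (fst y n))"
      by (simp add: aff_add_def scale_right_distrib sum.distrib)
    also have "\<dots> = fst (rho scale u x) n' + fst (rho scale u y) n'"
      by (simp add: rho_fst_superset[OF fin])
    finally show ?thesis .
  qed
  thus ?thesis by (auto simp: aff_add_def rho_def algebra_simps)
qed

lemma rho_scale:
  assumes "x \<in> aff_carrier"
  shows "rho scale u (aff_scale scale c x) = aff_scale scale c (rho scale u x)"
proof -
  let ?S = "{n. fst x n \<noteq> 0}"
  have fin: "finite ?S" using assms by (simp add: aff_carrier_def)
  have "fst (rho scale u (aff_scale scale c x)) n' = scale c (fst (rho scale u x) n')" for n'
  proof -
    have "fst (rho scale u (aff_scale scale c x)) n' = (\<Sum>n\<in>?S. scale (kap u n' n) (fst (aff_scale scale c x) n))"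
      by (rule rho_fst_superset[OF fin]) (auto simp: aff_scale_def)
    also have "\<dots> = scale c (\<Sum>n\<in>?S. scale (kap u n' n) (fst x n))"
      by (simp add: aff_scale_def scale_sum_right mult.commute)
    also have "\<dots> = scale c (fst (rho scale u x) n')"
      by (simp add: rho_fst_superset[OF fin])
    finally show ?thesis .
  qed
  thus ?thesis by (auto simp: aff_scale_def rho_def algebra_simps)
qed

lemma rho_uadd:
  assumes "G u" "G v"
  shows "rho scale (uadd u v) x = aff_add (rho scale u x) (rho scale v x)"
proof -
  have "uadd u v 0 0 0 = u 0 0 0 + v 0 0 0" by (simp add: uadd_def)
  hence "\<lfloor>uadd u v 0 0 0\<rfloor> = \<lfloor>u 0 0 0\<rfloor> + \<lfloor>v 0 0 0\<rfloor>" using assms by (simp add: G_def floor_add_Ints)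
  thus ?thesis
    by (simp add: rho_def aff_add_def kap_uadd[OF assms] scale_left_distrib sum.distrib algebra_simps)
qed

lemma rho_uone: assumes "x \<in> aff_carrier" shows "rho scale uone x = x"
proof -
  have fin: "finite {n. fst x n \<noteq> 0}" using assms by (simp add: aff_carrier_def)
  have "(\<Sum>n\<in>{n. fst x n \<noteq> 0}. scale (kap uone n' n) (fst x n)) = fst x n'" for n'
    by (simp add: kap_uone if_distrib[of "\<lambda>c. scale c _"] sum.delta[OF fin] cong: if_cong)
  thus ?thesis by (simp add: rho_def uone_def)
qed

lemma rho_umult:
  assumes "G u" "G v" "x \<in> aff_carrier"
  shows "rho scale (umult u v) x = rho scale u (rho scale v x)"
proof -
  obtain Dv where Dv: "band Dv v" "0 \<le> Dv" using G_band[OF assms(2)] by auto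
  let ?S = "{n. fst x n \<noteq> 0}"
  let ?S' = "win ?S Dv"
  have fin: "finite ?S" using assms by (simp add: aff_carrier_def)
  have fin': "finite ?S'" using fin by (rule finite_win)
  have sub': "{n'. fst (rho scale v x) n' \<noteq> 0} \<subseteq> ?S'" by (rule rho_supp[OF Dv(1)])
  have F: "fst (rho scale u (rho scale v x)) n'' = fst (rho scale (umult u v) x) n''" for n''
  proof -
    have "fst (rho scale u (rho scale v x)) n'' = (\<Sum>n'\<in>?S'. scale (kap u n'' n') (fst (rho scale v x) n'))"
      by (rule rho_fst_superset[OF fin' sub'])
    also have "\<dots> = (\<Sum>n'\<in>?S'. scale (kap u n'' n') (\<Sum>n\<in>?S. scale (kap v n' n) (fst x n)))"
      using rho_fst_superset[OF fin order_refl] by simp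
    also have "\<dots> = (\<Sum>n'\<in>?S'. \<Sum>n\<in>?S. scale (kap u n'' n' * kap v n' n) (fst x n))"
      by (simp add: scale_sum_right)
    also have "\<dots> = (\<Sum>n\<in>?S. \<Sum>n'\<in>?S'. scale (kap u n'' n' * kap v n' n) (fst x n))"
      by (rule sum.swap)
    also have "\<dots> = (\<Sum>n\<in>?S. scale (\<Sum>n'\<in>?S'. kap u n'' n' * kap v n' n) (fst x n))"
      by (simp add: scale_sum_left)
    also have "\<dots> = (\<Sum>n\<in>?S. scale (kap (umult u v) n'' n) (fst x n))"
    proof (rule sum.cong[OF refl])
      fix n assume "n \<in> ?S"
      hence "{n - Dv..n + Dv} \<subseteq> ?S'" by (auto simp: win_def)
      thus "scale (\<Sum>n'\<in>?S'. kap u n'' n' * kap v n' n) (fst x n) = scale (kap (umult u v) n'' n) (fst x n)"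
        by (simp add: kap_umult[OF assms(1,2) Dv fin'])
    qed
    also have "\<dots> = fst (rho scale (umult u v) x) n''"
      by (simp add: rho_def)
    finally show ?thesis .
  qed
  have S: "\<lfloor>umult u v 0 0 0\<rfloor> = \<lfloor>u 0 0 0\<rfloor> * \<lfloor>v 0 0 0\<rfloor>"
    using assms by (simp add: umult_def G_def floor_mult_Ints)
  show ?thesis
  proof (rule prod_eqI)
    show "fst (rho scale (umult u v) x) = fst (rho scale u (rho scale v x))"
      by (rule ext) (rule F[symmetric])
    show "snd (rho scale (umult u v) x) = snd (rho scale u (rho scale v x))"
      unfolding rho_snd S by simp
  qed
qed

end

lemma ibinom_vandermonde: "ibinom (a + b) r = (\<Sum>s\<le>r. ibinom a s * ibinom b (r - s))"
proof -
  have "(of_int (ibinom (a + b) r) :: rat) = of_int (\<Sum>s\<le>r. ibinom a s * ibinom b (r - s))"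
    using gbinomial_Vandermonde[of "of_int a :: rat" "of_int b" r]
    by (simp add: of_int_ibinom atLeast0AtMost)
  thus ?thesis by (simp only: of_int_eq_iff)
qed

lemma ibinom_absorb: "(a - int s) * ibinom a s = a * ibinom (a - 1) s"
proof -
  have "(of_int ((a - int s) * ibinom a s) :: rat) = of_int (a * ibinom (a - 1) s)"
    using gbinomial_absorb_comp[of "of_int a :: rat" s] by (simp add: of_int_ibinom)
  thus ?thesis by (simp only: of_int_eq_iff)
qed

lemma ibinom_0 [simp]: "ibinom a 0 = 1"
  by (simp add: ibinom_def)

lemma ibinom_eq0: assumes "0 \<le> a" "a < int r" shows "ibinom a r = 0"
proof -
  have "nat a \<in> {..<r}" using assms by auto
  moreover have "a - int (nat a) = 0" using assms by simp
  ultimately have P: "(\<Prod>i<r. a - int i) = 0" by (metis finite_lessThan prod_zero_iff)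
  show ?thesis unfolding ibinom_def P by simp
qed

lemma ibinom_pred_self: "0 < r \<Longrightarrow> ibinom (int r - 1) r = 0"
  by (rule ibinom_eq0) auto

lemma ibinom_zero_pos: "0 < r \<Longrightarrow> ibinom 0 r = 0"
  by (rule ibinom_eq0) auto

lemma sign_split: "s \<le> r \<Longrightarrow> ((-1::int)^s * a) * ((-1)^(r - s) * b) = (-1)^r * (a * b)"
proof -
  assume "s \<le> r"
  hence "(-1::int)^s * (-1)^(r - s) = (-1)^r" by (simp flip: power_add)
  thus ?thesis by (metis mult.assoc mult.left_commute)
qed

(* family X = L_(-1): c s n = (-1)^s binom(n,s), tau s = s *)
lemma V_X: "(-1)^r * ibinom (p + q) r = (\<Sum>s\<le>r. ((-1)^s * ibinom p s) * ((-1)^(r - s) * ibinom q (r - s)))"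
  by (simp add: ibinom_vandermonde sum_distrib_left sign_split)

lemma C_X: "(\<Sum>s\<le>r. (p - int s) * ((-1)^s * ibinom p s) * ((-1)^(r - s) * ibinom (int r - p) (r - s)))
   = (if r = 0 then p else 0)"
proof -
  have "(\<Sum>s\<le>r. (p - int s) * ((-1)^s * ibinom p s) * ((-1)^(r - s) * ibinom (int r - p) (r - s)))
     = (\<Sum>s\<le>r. (-1)^r * p * (ibinom (p - 1) s * ibinom (int r - p) (r - s)))"
  proof (rule sum.cong[OF refl])
    fix s assume "s \<in> {..r}"
    hence H: "((-1::int)^s * ibinom p s) * ((-1)^(r - s) * ibinom (int r - p) (r - s)) =
        (-1)^r * (ibinom p s * ibinom (int r - p) (r - s))" by (simp add: sign_split)
    have "(p - int s) * ((-1)^s * ibinom p s) * ((-1)^(r - s) * ibinom (int r - p) (r - s))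
       = (p - int s) * (((-1)^s * ibinom p s) * ((-1)^(r - s) * ibinom (int r - p) (r - s)))"
      by (rule mult.assoc)
    also have "\<dots> = (-1)^r * (((p - int s) * ibinom p s) * ibinom (int r - p) (r - s))"
      unfolding H by (simp only: mult_ac)
    also have "\<dots> = (-1)^r * p * (ibinom (p - 1) s * ibinom (int r - p) (r - s))"
      unfolding ibinom_absorb by (simp only: mult_ac)
    finally show "(p - int s) * ((-1)^s * ibinom p s) * ((-1)^(r - s) * ibinom (int r - p) (r - s)) =
        (-1)^r * p * (ibinom (p - 1) s * ibinom (int r - p) (r - s))" .
  qed
  also have "\<dots> = (-1)^r * p * ibinom (int r - 1) r"
    using ibinom_vandermonde[of "p - 1" "int r - p" r] by (simp add: sum_distrib_left)
  also have "\<dots> = (if r = 0 then p else 0)" by (simp add: ibinom_pred_self)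
  finally show ?thesis .
qed

(* family Z = L_1: c s n = binom(-n,s), tau s = -s *)
lemma V_Z: "ibinom (- (p + q)) r = (\<Sum>s\<le>r. ibinom (- p) s * ibinom (- q) (r - s))"
  using ibinom_vandermonde[of "- p" "- q" r] by simp

lemma C_Z: "(\<Sum>s\<le>r. (p - (- int s)) * ibinom (- p) s * ibinom (- (- int r - p)) (r - s))
   = (if r = 0 then p else 0)"
proof -
  have "(\<Sum>s\<le>r. (p - (- int s)) * ibinom (- p) s * ibinom (- (- int r - p)) (r - s))
     = (\<Sum>s\<le>r. p * (ibinom (- p - 1) s * ibinom (int r + p) (r - s)))"
  proof (rule sum.cong[OF refl])
    fix s assume "s \<in> {..r}"
    have "(p + int s) * ibinom (- p) s = - ((- p - int s) * ibinom (- p) s)" by (simp add: algebra_simps)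
    also have "\<dots> = p * ibinom (- p - 1) s" using ibinom_absorb[of "- p" s] by simp
    finally show "(p - (- int s)) * ibinom (- p) s * ibinom (- (- int r - p)) (r - s)
       = p * (ibinom (- p - 1) s * ibinom (int r + p) (r - s))" by (simp add: algebra_simps)
  qed
  also have "\<dots> = p * ibinom (int r - 1) r"
    using ibinom_vandermonde[of "- p - 1" "int r + p" r] by (simp add: sum_distrib_left)
  also have "\<dots> = (if r = 0 then p else 0)" by (simp add: ibinom_pred_self)
  finally show ?thesis .
qed

(* family Y = L_0: c s n = binom(2n,s), tau s = 0 *)
lemma V_Y: "ibinom (2 * (p + q)) r = (\<Sum>s\<le>r. ibinom (2 * p) s * ibinom (2 * q) (r - s))"
  using ibinom_vandermonde[of "2 * p" "2 * q" r] by (simp add: algebra_simps)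

lemma C_Y: "(\<Sum>s\<le>r. (p - 0) * ibinom (2 * p) s * ibinom (2 * (0 - p)) (r - s))
   = (if r = 0 then p else 0)"
proof -
  have "(\<Sum>s\<le>r. (p - 0) * ibinom (2 * p) s * ibinom (2 * (0 - p)) (r - s))
     = p * (\<Sum>s\<le>r. ibinom (2 * p) s * ibinom (2 * (0 - p)) (r - s))"
    by (simp only: sum_distrib_left mult.assoc diff_zero)
  also have "\<dots> = p * ibinom (2 * p + 2 * (0 - p)) r" by (simp only: ibinom_vandermonde)
  finally show ?thesis by (simp add: ibinom_zero_pos)
qed

definition shop :: "('k::times \<Rightarrow> 'g \<Rightarrow> 'g) \<Rightarrow> (int \<Rightarrow> 'k) \<Rightarrow> int \<Rightarrow> 'k \<Rightarrow> ('g, 'k) aff \<Rightarrow> ('g, 'k) aff" where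
  "shop sc c t e x = (\<lambda>n'. sc (c (n' + t)) (fst x (n' + t)), e * snd x)"

lemma shop_fst: "fst (shop sc c t e x) n' = sc (c (n' + t)) (fst x (n' + t))"
  by (simp add: shop_def)
lemma shop_snd: "snd (shop sc c t e x) = e * snd x"
  by (simp add: shop_def)

lemma aff_sum_fst: "fst (aff_sum S f) n = (\<Sum>s\<in>S. fst (f s) n)"
  by (simp add: aff_sum_def)
lemma aff_sum_snd: "snd (aff_sum S f) = (\<Sum>s\<in>S. snd (f s))"
  by (simp add: aff_sum_def)

context vector_space
begin

lemma lie_facts:
  assumes L: "lie_algebra_with_form scale br B"
  shows "br (scale a u) (scale b v) = scale (a * b) (br u v)"
    and "br 0 v = 0"
    and "B (scale a u) (scale b v) = a * b * B u v"
    and "B 0 v = 0"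
proof -
  have br1: "br (scale c x) y = scale c (br x y)" and br2: "br x (scale c y) = scale c (br x y)"
    and B1: "B (scale c x) y = c * B x y" and B2: "B x (scale c y) = c * B x y" for c x y
    using L by (simp_all add: lie_algebra_with_form_def)
  show "br (scale a u) (scale b v) = scale (a * b) (br u v)" by (simp add: br1 br2)
  show "br 0 v = 0" using br1[of 0 0 v] by simp
  show "B (scale a u) (scale b v) = a * b * B u v" by (simp add: B1 B2)
  show "B 0 v = 0" using B1[of 0 0 v] by simp
qed

lemma shop_carrier: "x \<in> aff_carrier \<Longrightarrow> shop scale c t e x \<in> aff_carrier"
proof -
  assume x: "x \<in> aff_carrier"
  have "{n. fst (shop scale c t e x) n \<noteq> 0} \<subseteq> (\<lambda>p. p - t) ` {n. fst x n \<noteq> 0}"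
  proof
    fix n assume "n \<in> {n. fst (shop scale c t e x) n \<noteq> 0}"
    hence "fst x (n + t) \<noteq> 0" by (auto simp: shop_fst)
    thus "n \<in> (\<lambda>p. p - t) ` {n. fst x n \<noteq> 0}" by (intro image_eqI[of _ _ "n + t"]) auto
  qed
  moreover have "finite ((\<lambda>p. p - t) ` {n. fst x n \<noteq> 0})" using x by (simp add: aff_carrier_def)
  ultimately show ?thesis by (simp add: aff_carrier_def finite_subset)
qed

lemma shop_sum_reindex:
  assumes x: "x \<in> aff_carrier" and g0: "\<And>i. fst (shop scale c t e x) i = 0 \<Longrightarrow> g i = 0"
  shows "(\<Sum>i\<in>{n. fst (shop scale c t e x) n \<noteq> 0}. g i) = (\<Sum>p\<in>{n. fst x n \<noteq> 0}. g (p - t))"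
proof -
  let ?S = "{n. fst x n \<noteq> 0}"
  let ?T = "(\<lambda>p. p - t) ` ?S"
  have fin: "finite ?T" using x by (simp add: aff_carrier_def)
  have sub: "{n. fst (shop scale c t e x) n \<noteq> 0} \<subseteq> ?T"
  proof
    fix n assume "n \<in> {n. fst (shop scale c t e x) n \<noteq> 0}"
    hence "fst x (n + t) \<noteq> 0" by (auto simp: shop_fst)
    thus "n \<in> ?T" by (intro image_eqI[of _ _ "n + t"]) auto
  qed
  have "(\<Sum>i\<in>{n. fst (shop scale c t e x) n \<noteq> 0}. g i) = (\<Sum>i\<in>?T. g i)"
    by (rule sum.mono_neutral_left[OF fin sub]) (auto intro: g0)
  also have "\<dots> = (\<Sum>p\<in>?S. g (p - t))"
    by (rule sum.reindex_cong[of "\<lambda>p. p - t"]) (auto simp: inj_on_def)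
  finally show ?thesis .
qed

lemma fst_bracket_shop:
  assumes L: "lie_algebra_with_form scale br B" and x: "x \<in> aff_carrier"
  shows "fst (aff_bracket br B (shop scale c1 t1 e1 x) (shop scale c2 t2 e2 y)) n' =
    (\<Sum>p\<in>{n. fst x n \<noteq> 0}. scale (c1 p * c2 (n' + t1 + t2 - p)) (br (fst x p) (fst y (n' + t1 + t2 - p))))"
proof -
  have "fst (aff_bracket br B (shop scale c1 t1 e1 x) (shop scale c2 t2 e2 y)) n' =
     (\<Sum>i\<in>{n. fst (shop scale c1 t1 e1 x) n \<noteq> 0}. br (fst (shop scale c1 t1 e1 x) i) (fst (shop scale c2 t2 e2 y) (n' - i)))"
    by (simp add: aff_bracket_def)
  also have "\<dots> = (\<Sum>p\<in>{n. fst x n \<noteq> 0}. br (fst (shop scale c1 t1 e1 x) (p - t1)) (fst (shop scale c2 t2 e2 y) (n' - (p - t1))))"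
    by (rule shop_sum_reindex[OF x]) (simp add: lie_facts(2)[OF L])
  also have "\<dots> = (\<Sum>p\<in>{n. fst x n \<noteq> 0}. scale (c1 p * c2 (n' + t1 + t2 - p)) (br (fst x p) (fst y (n' + t1 + t2 - p))))"
  proof (rule sum.cong[OF refl])
    fix p
    have e: "n' - (p - t1) + t2 = n' + t1 + t2 - p" by simp
    show "br (fst (shop scale c1 t1 e1 x) (p - t1)) (fst (shop scale c2 t2 e2 y) (n' - (p - t1))) =
       scale (c1 p * c2 (n' + t1 + t2 - p)) (br (fst x p) (fst y (n' + t1 + t2 - p)))"
      unfolding shop_fst e by (simp add: lie_facts(1)[OF L])
  qed
  finally show ?thesis .
qed

lemma snd_bracket_shop:
  assumes L: "lie_algebra_with_form scale br B" and x: "x \<in> aff_carrier"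
  shows "snd (aff_bracket br B (shop scale c1 t1 e1 x) (shop scale c2 t2 e2 y)) =
    (\<Sum>p\<in>{n. fst x n \<noteq> 0}. of_int (p - t1) * (c1 p * c2 (t1 + t2 - p)) * B (fst x p) (fst y (t1 + t2 - p)))"
proof -
  have "snd (aff_bracket br B (shop scale c1 t1 e1 x) (shop scale c2 t2 e2 y)) =
     (\<Sum>i\<in>{n. fst (shop scale c1 t1 e1 x) n \<noteq> 0}. of_int i * B (fst (shop scale c1 t1 e1 x) i) (fst (shop scale c2 t2 e2 y) (- i)))"
    by (simp add: aff_bracket_def)
  also have "\<dots> = (\<Sum>p\<in>{n. fst x n \<noteq> 0}. of_int (p - t1) * B (fst (shop scale c1 t1 e1 x) (p - t1)) (fst (shop scale c2 t2 e2 y) (- (p - t1))))"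
    by (rule shop_sum_reindex[OF x]) (simp add: lie_facts(4)[OF L])
  also have "\<dots> = (\<Sum>p\<in>{n. fst x n \<noteq> 0}. of_int (p - t1) * (c1 p * c2 (t1 + t2 - p)) * B (fst x p) (fst y (t1 + t2 - p)))"
  proof (rule sum.cong[OF refl])
    fix p
    have e: "- (p - t1) + t2 = t1 + t2 - p" by simp
    show "of_int (p - t1) * B (fst (shop scale c1 t1 e1 x) (p - t1)) (fst (shop scale c2 t2 e2 y) (- (p - t1))) =
       of_int (p - t1) * (c1 p * c2 (t1 + t2 - p)) * B (fst x p) (fst y (t1 + t2 - p))"
      unfolding shop_fst e by (simp add: lie_facts(3)[OF L] mult.assoc)
  qed
  finally show ?thesis .
qed

lemma shop_leibniz:
  assumes L: "lie_algebra_with_form scale br B" and x: "x \<in> aff_carrier"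
    and tau: "\<And>s. s \<le> r \<Longrightarrow> tau s + tau (r - s) = tau r" and tau0: "tau 0 = 0"
    and V: "\<And>p q. c r (p + q) = (\<Sum>s\<le>r. c s p * c (r - s) q)"
    and C: "\<And>p. (\<Sum>s\<le>r. of_int (p - tau s) * (c s p * c (r - s) (tau r - p))) = (if r = 0 then of_int p else 0)"
    and e: "\<And>s. e s = (if s = 0 then 1 else 0)"
  shows "shop scale (c r) (tau r) (e r) (aff_bracket br B x y) =
    aff_sum {..r} (\<lambda>s. aff_bracket br B (shop scale (c s) (tau s) (e s) x) (shop scale (c (r - s)) (tau (r - s)) (e (r - s)) y))"
proof (rule prod_eqI)
  let ?S = "{n. fst x n \<noteq> 0}"
  show "fst (shop scale (c r) (tau r) (e r) (aff_bracket br B x y)) =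
    fst (aff_sum {..r} (\<lambda>s. aff_bracket br B (shop scale (c s) (tau s) (e s) x) (shop scale (c (r - s)) (tau (r - s)) (e (r - s)) y)))"
  proof (rule ext)
    fix n'
    define N where "N = n' + tau r"
    have "fst (shop scale (c r) (tau r) (e r) (aff_bracket br B x y)) n' =
       scale (c r N) (\<Sum>p\<in>?S. br (fst x p) (fst y (N - p)))"
      by (simp add: shop_fst aff_bracket_def N_def)
    also have "\<dots> = (\<Sum>p\<in>?S. \<Sum>s\<le>r. scale (c s p * c (r - s) (N - p)) (br (fst x p) (fst y (N - p))))"
      unfolding scale_sum_right
    proof (rule sum.cong[OF refl])
      fix p
      have "c r N = (\<Sum>s\<le>r. c s p * c (r - s) (N - p))" using V[of p "N - p"] by simp
      thus "scale (c r N) (br (fst x p) (fst y (N - p))) = (\<Sum>s\<le>r. scale (c s p * c (r - s) (N - p)) (br (fst x p) (fst y (N - p))))"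
        by (simp add: scale_sum_left)
    qed
    also have "\<dots> = (\<Sum>s\<le>r. \<Sum>p\<in>?S. scale (c s p * c (r - s) (N - p)) (br (fst x p) (fst y (N - p))))"
      by (rule sum.swap)
    also have "\<dots> = (\<Sum>s\<le>r. fst (aff_bracket br B (shop scale (c s) (tau s) (e s) x) (shop scale (c (r - s)) (tau (r - s)) (e (r - s)) y)) n')"
    proof (rule sum.cong[OF refl])
      fix s assume "s \<in> {..r}"
      hence "n' + tau s + tau (r - s) = N" using tau[of s] by (simp add: N_def)
      thus "(\<Sum>p\<in>?S. scale (c s p * c (r - s) (N - p)) (br (fst x p) (fst y (N - p)))) =
        fst (aff_bracket br B (shop scale (c s) (tau s) (e s) x) (shop scale (c (r - s)) (tau (r - s)) (e (r - s)) y)) n'"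
        by (simp add: fst_bracket_shop[OF L x])
    qed
    finally show "fst (shop scale (c r) (tau r) (e r) (aff_bracket br B x y)) n' =
      fst (aff_sum {..r} (\<lambda>s. aff_bracket br B (shop scale (c s) (tau s) (e s) x) (shop scale (c (r - s)) (tau (r - s)) (e (r - s)) y))) n'"
      by (simp add: aff_sum_fst)
  qed
  have "snd (aff_sum {..r} (\<lambda>s. aff_bracket br B (shop scale (c s) (tau s) (e s) x) (shop scale (c (r - s)) (tau (r - s)) (e (r - s)) y)))
     = (\<Sum>s\<le>r. \<Sum>p\<in>?S. of_int (p - tau s) * (c s p * c (r - s) (tau r - p)) * B (fst x p) (fst y (tau r - p)))"
    unfolding aff_sum_snd
  proof (rule sum.cong[OF refl])
    fix s assume "s \<in> {..r}"
    thus "snd (aff_bracket br B (shop scale (c s) (tau s) (e s) x) (shop scale (c (r - s)) (tau (r - s)) (e (r - s)) y)) =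
      (\<Sum>p\<in>?S. of_int (p - tau s) * (c s p * c (r - s) (tau r - p)) * B (fst x p) (fst y (tau r - p)))"
      using tau[of s] by (simp add: snd_bracket_shop[OF L x])
  qed
  also have "\<dots> = (\<Sum>p\<in>?S. \<Sum>s\<le>r. of_int (p - tau s) * (c s p * c (r - s) (tau r - p)) * B (fst x p) (fst y (tau r - p)))"
    by (rule sum.swap)
  also have "\<dots> = (\<Sum>p\<in>?S. (if r = 0 then of_int p else 0) * B (fst x p) (fst y (tau r - p)))"
    by (simp only: sum_distrib_right[symmetric] C)
  also have "\<dots> = snd (shop scale (c r) (tau r) (e r) (aff_bracket br B x y))"
    by (cases "r = 0") (simp_all add: shop_snd aff_bracket_def e tau0 sum_distrib_left)
  finally show "snd (shop scale (c r) (tau r) (e r) (aff_bracket br B x y)) =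
    snd (aff_sum {..r} (\<lambda>s. aff_bracket br B (shop scale (c s) (tau s) (e s) x) (shop scale (c (r - s)) (tau (r - s)) (e (r - s)) y)))"
    by simp
qed

end

definition cX :: "nat \<Rightarrow> int \<Rightarrow> 'k::ring_1" where "cX r n = of_int ((-1)^r * ibinom n r)"
definition cZ :: "nat \<Rightarrow> int \<Rightarrow> 'k::ring_1" where "cZ r n = of_int (ibinom (- n) r)"
definition cY :: "nat \<Rightarrow> int \<Rightarrow> 'k::ring_1" where "cY r n = of_int (ibinom (2 * n) r)"
definition edel :: "nat \<Rightarrow> 'k::ring_1" where "edel r = (if r = 0 then 1 else 0)"

lemma kap_L_m1: "kap (L_m1_div r) n' n = (if n = n' + int r then cX r n else 0)"
  by (auto simp: kap_def Acoef_L_m1_div cX_def add.commute simp del: of_int_mult of_int_power)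
lemma kap_L_1: "kap (L_1_div r) n' n = (if n = n' + - int r then cZ r n else 0)"
  by (auto simp: kap_def Acoef_L_1_div cZ_def)
lemma kap_L_0: "kap (L_0_div r) n' n = (if n = n' + 0 then cY r n else 0)"
  by (auto simp: kap_def Acoef_L_0_div cY_def)

lemma floor_gen000:
  "(of_int \<lfloor>L_m1_div r 0 0 0\<rfloor> :: 'k::ring_1) = edel r"
  "(of_int \<lfloor>L_1_div r 0 0 0\<rfloor> :: 'k::ring_1) = edel r"
  "(of_int \<lfloor>L_0_div r 0 0 0\<rfloor> :: 'k::ring_1) = edel r"
  by (simp_all add: L_m1_div_000 L_1_div_000 L_0_div_000 edel_def)

lemma V_X': "(cX r (p + q) :: 'k::ring_1) = (\<Sum>s\<le>r. cX s p * cX (r - s) q)"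
  unfolding cX_def by (simp only: V_X of_int_sum of_int_mult)

lemma C_X': "(\<Sum>s\<le>r. of_int (p - int s) * ((cX s p :: 'k::ring_1) * cX (r - s) (int r - p))) = (if r = 0 then of_int p else 0)"
proof -
  have "(\<Sum>s\<le>r. of_int (p - int s) * ((cX s p :: 'k) * cX (r - s) (int r - p))) =
    of_int (\<Sum>s\<le>r. (p - int s) * ((-1)^s * ibinom p s) * ((-1)^(r - s) * ibinom (int r - p) (r - s)))"
    unfolding cX_def by (simp only: of_int_sum of_int_mult mult.assoc)
  also have "\<dots> = of_int (if r = 0 then p else 0)" by (simp only: C_X)
  finally show ?thesis by simp
qed

lemma V_Z': "(cZ r (p + q) :: 'k::ring_1) = (\<Sum>s\<le>r. cZ s p * cZ (r - s) q)"
  unfolding cZ_def by (simp only: V_Z of_int_sum of_int_mult)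

lemma C_Z': "(\<Sum>s\<le>r. of_int (p - - int s) * ((cZ s p :: 'k::ring_1) * cZ (r - s) (- int r - p))) = (if r = 0 then of_int p else 0)"
proof -
  have "(\<Sum>s\<le>r. of_int (p - - int s) * ((cZ s p :: 'k) * cZ (r - s) (- int r - p))) =
    of_int (\<Sum>s\<le>r. (p - (- int s)) * ibinom (- p) s * ibinom (- (- int r - p)) (r - s))"
    unfolding cZ_def by (simp only: of_int_sum of_int_mult mult.assoc)
  also have "\<dots> = of_int (if r = 0 then p else 0)" by (simp only: C_Z)
  finally show ?thesis by simp
qed

lemma V_Y': "(cY r (p + q) :: 'k::ring_1) = (\<Sum>s\<le>r. cY s p * cY (r - s) q)"
  unfolding cY_def by (simp only: V_Y of_int_sum of_int_mult)

lemma C_Y': "(\<Sum>s\<le>r. of_int (p - 0) * ((cY s p :: 'k::ring_1) * cY (r - s) (0 - p))) = (if r = 0 then of_int p else 0)"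
proof -
  have "(\<Sum>s\<le>r. of_int (p - 0) * ((cY s p :: 'k) * cY (r - s) (0 - p))) =
    of_int (\<Sum>s\<le>r. (p - 0) * ibinom (2 * p) s * ibinom (2 * (0 - p)) (r - s))"
    unfolding cY_def by (simp only: of_int_sum of_int_mult mult.assoc)
  also have "\<dots> = of_int (if r = 0 then p else 0)" by (simp only: C_Y)
  finally show ?thesis by simp
qed

lemma triple_sum:
  "(\<Sum>c\<in>C. \<Sum>b\<in>B. \<Sum>a\<in>A. g a b c) = (\<Sum>(a, b, c)\<in>A \<times> B \<times> C. g a b c)"
proof -
  have "(\<Sum>(a, b, c)\<in>A \<times> B \<times> C. g a b c) = (\<Sum>a\<in>A. \<Sum>(b, c)\<in>B \<times> C. g a b c)"
    by (simp add: sum.cartesian_product split_def)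
  also have "\<dots> = (\<Sum>a\<in>A. \<Sum>b\<in>B. \<Sum>c\<in>C. g a b c)"
    by (simp add: sum.cartesian_product split_def)
  also have "\<dots> = (\<Sum>b\<in>B. \<Sum>a\<in>A. \<Sum>c\<in>C. g a b c)" by (rule sum.swap)
  also have "\<dots> = (\<Sum>b\<in>B. \<Sum>c\<in>C. \<Sum>a\<in>A. g a b c)" by (simp add: sum.swap[of _ A])
  also have "\<dots> = (\<Sum>c\<in>C. \<Sum>b\<in>B. \<Sum>a\<in>A. g a b c)" by (rule sum.swap)
  finally show ?thesis by simp
qed

lemma triple_sum':
  "(\<Sum>c\<in>C. \<Sum>b\<in>B. \<Sum>a\<in>A. g a b c) = (\<Sum>s\<in>A \<times> B \<times> C. g (fst s) (fst (snd s)) (snd (snd s)))"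
  unfolding triple_sum by (simp add: split_def)

lemma aff_triple_sum:
  "aff_sum {..k} (\<lambda>c. aff_sum {..j} (\<lambda>b. aff_sum {..i} (\<lambda>a. F a b c)))
   = aff_sum {(a, b, c). a \<le> i \<and> b \<le> j \<and> c \<le> k} (\<lambda>(a, b, c). F a b c)"
proof -
  have set: "{(a, b, c). a \<le> i \<and> b \<le> j \<and> c \<le> k} = {..i} \<times> {..j} \<times> {..k}" by auto
  show ?thesis unfolding set aff_sum_def
    by (simp add: triple_sum' split_def)
qed

context vector_space
begin

lemma rho_shop:
  assumes x: "x \<in> aff_carrier" and k: "\<And>n' n. (kap u n' n :: 'a) = (if n = n' + t then c n else 0)"
  shows "rho scale u x = shop scale c t (of_int \<lfloor>u 0 0 0\<rfloor>) x"
proof (rule prod_eqI)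
  have fin: "finite {n. fst x n \<noteq> 0}" using x by (simp add: aff_carrier_def)
  show "fst (rho scale u x) = fst (shop scale c t (of_int \<lfloor>u 0 0 0\<rfloor>) x)"
  proof (rule ext)
    fix n'
    have "fst (rho scale u x) n' = (\<Sum>n\<in>{n. fst x n \<noteq> 0}. if n = n' + t then scale (c n) (fst x n) else 0)"
      by (simp add: rho_def k if_distrib[of "\<lambda>c. scale c _"] cong: if_cong)
    also have "\<dots> = scale (c (n' + t)) (fst x (n' + t))"
      by (simp add: sum.delta[OF fin])
    finally show "fst (rho scale u x) n' = fst (shop scale c t (of_int \<lfloor>u 0 0 0\<rfloor>) x) n'"
      by (simp add: shop_fst)
  qed
  show "snd (rho scale u x) = snd (shop scale c t (of_int \<lfloor>u 0 0 0\<rfloor>) x)"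
    by (simp add: rho_snd shop_snd)
qed

lemma rho_X: "x \<in> aff_carrier \<Longrightarrow> rho scale (L_m1_div r) x = shop scale (cX r) (int r) (edel r) x"
  using rho_shop[of x "L_m1_div r" "int r" "cX r"] by (simp add: kap_L_m1 floor_gen000)
lemma rho_Z: "x \<in> aff_carrier \<Longrightarrow> rho scale (L_1_div r) x = shop scale (cZ r) (- int r) (edel r) x"
  using rho_shop[of x "L_1_div r" "- int r" "cZ r"] by (simp add: kap_L_1 floor_gen000)
lemma rho_Y: "x \<in> aff_carrier \<Longrightarrow> rho scale (L_0_div r) x = shop scale (cY r) 0 (edel r) x"
  using rho_shop[of x "L_0_div r" 0 "cY r"] by (simp add: kap_L_0 floor_gen000)

lemma bracket_carrier:
  assumes L: "lie_algebra_with_form scale br B" and x: "x \<in> aff_carrier" and y: "y \<in> aff_carrier"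
  shows "aff_bracket br B x y \<in> aff_carrier"
proof -
  let ?S = "{n. fst x n \<noteq> 0}" and ?T = "{n. fst y n \<noteq> 0}"
  have br0: "br u 0 = 0" for u using L unfolding lie_algebra_with_form_def
    by (metis scale_zero_left)
  have "{m. fst (aff_bracket br B x y) m \<noteq> 0} \<subseteq> (\<lambda>(i, j). i + j) ` (?S \<times> ?T)"
  proof
    fix m assume "m \<in> {m. fst (aff_bracket br B x y) m \<noteq> 0}"
    hence "(\<Sum>i\<in>?S. br (fst x i) (fst y (m - i))) \<noteq> 0" by (simp add: aff_bracket_def)
    then obtain i where i: "i \<in> ?S" "br (fst x i) (fst y (m - i)) \<noteq> 0"
      by (meson sum.neutral)
    hence "fst y (m - i) \<noteq> 0" using br0 by auto
    thus "m \<in> (\<lambda>(i, j). i + j) ` (?S \<times> ?T)" using i by (intro image_eqI[of _ _ "(i, m - i)"]) auto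
  qed
  moreover have "finite ((\<lambda>(i, j). i + j) ` (?S \<times> ?T))" using x y by (simp add: aff_carrier_def)
  ultimately show ?thesis by (simp add: aff_carrier_def finite_subset)
qed

lemma aff_sum_carrier: "(\<And>s. s \<in> S \<Longrightarrow> f s \<in> aff_carrier) \<Longrightarrow> finite S \<Longrightarrow> aff_sum S f \<in> aff_carrier"
proof -
  assume f: "\<And>s. s \<in> S \<Longrightarrow> f s \<in> aff_carrier" and fin: "finite S"
  have "{m. fst (aff_sum S f) m \<noteq> 0} \<subseteq> (\<Union>s\<in>S. {m. fst (f s) m \<noteq> 0})"
    by (auto simp: aff_sum_fst intro: ccontr dest: sum.neutral)
  moreover have "finite (\<Union>s\<in>S. {m. fst (f s) m \<noteq> 0})" using f fin by (auto simp: aff_carrier_def)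
  ultimately show ?thesis by (simp add: aff_carrier_def finite_subset)
qed

lemma rho_aff_sum:
  assumes "finite S" "\<And>s. s \<in> S \<Longrightarrow> f s \<in> aff_carrier"
  shows "rho scale u (aff_sum S f) = aff_sum S (\<lambda>s. rho scale u (f s))"
  using assms
proof (induction S rule: finite_induct)
  case empty
  have "rho scale u (aff_sum {} f) = ((\<lambda>n'. 0), 0)" by (simp add: rho_def aff_sum_def)
  then show ?case by (simp add: aff_sum_def)
next
  case (insert a S)
  have "aff_sum (insert a S) f = aff_add (f a) (aff_sum S f)"
    using insert by (simp add: aff_sum_def aff_add_def)
  moreover have "aff_sum (insert a S) (\<lambda>s. rho scale u (f s)) = aff_add (rho scale u (f a)) (aff_sum S (\<lambda>s. rho scale u (f s)))"
    using insert by (simp add: aff_sum_def aff_add_def)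
  moreover have "aff_sum S f \<in> aff_carrier" using insert by (intro aff_sum_carrier) auto
  ultimately show ?case using insert rho_add by auto
qed

lemma leib_X:
  assumes L: "lie_algebra_with_form scale br B" and x: "x \<in> aff_carrier" and y: "y \<in> aff_carrier"
  shows "rho scale (L_m1_div r) (aff_bracket br B x y) =
    aff_sum {..r} (\<lambda>s. aff_bracket br B (rho scale (L_m1_div s) x) (rho scale (L_m1_div (r - s)) y))"
  unfolding rho_X[OF bracket_carrier[OF L x y]] rho_X[OF x] rho_X[OF y]
  by (rule shop_leibniz[OF L x _ _ V_X' C_X']) (simp_all add: edel_def)

lemma leib_Z:
  assumes L: "lie_algebra_with_form scale br B" and x: "x \<in> aff_carrier" and y: "y \<in> aff_carrier"
  shows "rho scale (L_1_div r) (aff_bracket br B x y) =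
    aff_sum {..r} (\<lambda>s. aff_bracket br B (rho scale (L_1_div s) x) (rho scale (L_1_div (r - s)) y))"
  unfolding rho_Z[OF bracket_carrier[OF L x y]] rho_Z[OF x] rho_Z[OF y]
  by (rule shop_leibniz[OF L x _ _ V_Z' C_Z']) (simp_all add: edel_def)

lemma leib_Y:
  assumes L: "lie_algebra_with_form scale br B" and x: "x \<in> aff_carrier" and y: "y \<in> aff_carrier"
  shows "rho scale (L_0_div r) (aff_bracket br B x y) =
    aff_sum {..r} (\<lambda>s. aff_bracket br B (rho scale (L_0_div s) x) (rho scale (L_0_div (r - s)) y))"
  unfolding rho_Y[OF bracket_carrier[OF L x y]] rho_Y[OF x] rho_Y[OF y]
  by (rule shop_leibniz[OF L x _ _ V_Y' C_Y']) (simp_all add: edel_def)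

end

lemma aff_sum_cong: "(\<And>s. s \<in> S \<Longrightarrow> f s = g s) \<Longrightarrow> aff_sum S f = aff_sum S g"
  by (simp add: aff_sum_def)

context vector_space
begin

lemma rho_pbw: "z \<in> aff_carrier \<Longrightarrow>
  rho scale (pbw a b c) z = rho scale (L_m1_div a) (rho scale (L_0_div b) (rho scale (L_1_div c) z))"
  unfolding pbw_def
  by (simp add: rho_umult G_umult G_L_m1_div G_L_0_div G_L_1_div rho_carrier)

lemma pbw_compat:
  assumes L: "lie_algebra_with_form scale br B" and x: "x \<in> aff_carrier" and y: "y \<in> aff_carrier"
  shows "rho scale (pbw i j k) (aff_bracket br B x y)
        = aff_sum {(a, b, c). a \<le> i \<and> b \<le> j \<and> c \<le> k}
            (\<lambda>(a, b, c). aff_bracket br B (rho scale (pbw a b c) x) (rho scale (pbw (i - a) (j - b) (k - c)) y))"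
proof -
  define TX where "TX a = rho scale (L_m1_div a)" for a
  define TY where "TY a = rho scale (L_0_div a)" for a
  define TZ where "TZ a = rho scale (L_1_div a)" for a
  have cX: "z \<in> aff_carrier \<Longrightarrow> TX a z \<in> aff_carrier" for a z by (simp add: TX_def rho_carrier G_L_m1_div)
  have cY: "z \<in> aff_carrier \<Longrightarrow> TY a z \<in> aff_carrier" for a z by (simp add: TY_def rho_carrier G_L_0_div)
  have cZ: "z \<in> aff_carrier \<Longrightarrow> TZ a z \<in> aff_carrier" for a z by (simp add: TZ_def rho_carrier G_L_1_div)
  note bc = bracket_carrier[OF L]
  have "rho scale (pbw i j k) (aff_bracket br B x y) = TX i (TY j (TZ k (aff_bracket br B x y)))"
    by (simp add: rho_pbw bc x y TX_def TY_def TZ_def)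
  also have "\<dots> = TX i (TY j (aff_sum {..k} (\<lambda>c. aff_bracket br B (TZ c x) (TZ (k - c) y))))"
    by (simp add: TZ_def leib_Z[OF L x y])
  also have "\<dots> = TX i (aff_sum {..k} (\<lambda>c. TY j (aff_bracket br B (TZ c x) (TZ (k - c) y))))"
    unfolding TY_def by (rule arg_cong[where f="TX i"], rule rho_aff_sum) (auto intro!: bc cZ x y)
  also have "\<dots> = TX i (aff_sum {..k} (\<lambda>c. aff_sum {..j} (\<lambda>b. aff_bracket br B (TY b (TZ c x)) (TY (j - b) (TZ (k - c) y)))))"
    by (rule arg_cong[where f="TX i"], rule aff_sum_cong) (simp add: TY_def leib_Y[OF L] cZ x y)
  also have "\<dots> = aff_sum {..k} (\<lambda>c. TX i (aff_sum {..j} (\<lambda>b. aff_bracket br B (TY b (TZ c x)) (TY (j - b) (TZ (k - c) y)))))"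
    unfolding TX_def by (rule rho_aff_sum) (auto intro!: aff_sum_carrier bc cY cZ x y)
  also have "\<dots> = aff_sum {..k} (\<lambda>c. aff_sum {..j} (\<lambda>b. TX i (aff_bracket br B (TY b (TZ c x)) (TY (j - b) (TZ (k - c) y)))))"
    by (rule aff_sum_cong) (unfold TX_def, rule rho_aff_sum, auto intro!: bc cY cZ x y)
  also have "\<dots> = aff_sum {..k} (\<lambda>c. aff_sum {..j} (\<lambda>b. aff_sum {..i} (\<lambda>a.
      aff_bracket br B (TX a (TY b (TZ c x))) (TX (i - a) (TY (j - b) (TZ (k - c) y))))))"
    by (intro aff_sum_cong) (simp add: TX_def leib_X[OF L] cY cZ x y)
  also have "\<dots> = aff_sum {(a, b, c). a \<le> i \<and> b \<le> j \<and> c \<le> k}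
      (\<lambda>(a, b, c). aff_bracket br B (TX a (TY b (TZ c x))) (TX (i - a) (TY (j - b) (TZ (k - c) y))))"
    by (rule aff_triple_sum)
  also have "\<dots> = aff_sum {(a, b, c). a \<le> i \<and> b \<le> j \<and> c \<le> k}
      (\<lambda>(a, b, c). aff_bracket br B (rho scale (pbw a b c) x) (rho scale (pbw (i - a) (j - b) (k - c)) y))"
    by (rule aff_sum_cong) (auto simp: rho_pbw x y TX_def TY_def TZ_def)
  finally show ?thesis .
qed

end

theorem lemma5p1:
  fixes scale :: "'k::alg_closed_field \<Rightarrow> 'g::ab_group_add \<Rightarrow> 'g"
    and br :: "'g \<Rightarrow> 'g \<Rightarrow> 'g"
    and B :: "'g \<Rightarrow> 'g \<Rightarrow> 'k"
  assumes "prime CHAR('k)" and "odd CHAR('k)"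
    and "lie_algebra_with_form scale br B"
  shows "\<exists>\<rho> :: U \<Rightarrow> ('g, 'k) aff \<Rightarrow> ('g, 'k) aff.
     \<comment> \<open>each element of U(sl_2)_Z acts by an F-linear endomorphism of g-hat\<close>
     (\<forall>u\<in>UZ. \<forall>x\<in>aff_carrier. \<rho> u x \<in> aff_carrier)
   \<and> (\<forall>u\<in>UZ. \<forall>x\<in>aff_carrier. \<forall>y\<in>aff_carrier.
        \<rho> u (aff_add x y) = aff_add (\<rho> u x) (\<rho> u y))
   \<and> (\<forall>u\<in>UZ. \<forall>x\<in>aff_carrier. \<forall>c.
        \<rho> u (aff_scale scale c x) = aff_scale scale c (\<rho> u x))
     \<comment> \<open>ring homomorphism U(sl_2)_Z \<rightarrow> End_F(g-hat), i.e. an H-module structure\<close>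
   \<and> (\<forall>u\<in>UZ. \<forall>v\<in>UZ. \<forall>x\<in>aff_carrier. \<rho> (uadd u v) x = aff_add (\<rho> u x) (\<rho> v x))
   \<and> (\<forall>u\<in>UZ. \<forall>v\<in>UZ. \<forall>x\<in>aff_carrier. \<rho> (umult u v) x = \<rho> u (\<rho> v x))
   \<and> (\<forall>x\<in>aff_carrier. \<rho> uone x = x)
     \<comment> \<open>the prescribed action\<close>
   \<and> (\<forall>r. \<rho> (L_m1_div r) aff_k = aff_scale scale (if r = 0 then 1 else 0) aff_k)
   \<and> (\<forall>r. \<rho> (L_1_div r) aff_k = aff_scale scale (if r = 0 then 1 else 0) aff_k)
   \<and> (\<forall>r. \<rho> (L_0_div r) aff_k = aff_scale scale (if r = 0 then 1 else 0) aff_k)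
   \<and> (\<forall>r a n. \<rho> (L_m1_div r) (aff_loop a n)
        = aff_scale scale (of_int ((-1) ^ r * (ibinom n r))) (aff_loop a (n - int r)))
   \<and> (\<forall>r a n. \<rho> (L_1_div r) (aff_loop a n)
        = aff_scale scale (of_int (ibinom (- n) r)) (aff_loop a (n + int r)))
   \<and> (\<forall>r a n. \<rho> (L_0_div r) (aff_loop a n)
        = aff_scale scale (of_int (ibinom (2 * n) r)) (aff_loop a n))
     \<comment> \<open>module Lie algebra compatibility b[x,y] = \<Sum> [b(1) x, b(2) y], checked on the
        F-basis of PBW monomials (both sides are linear in b)\<close>
   \<and> (\<forall>i j k. \<forall>x\<in>aff_carrier. \<forall>y\<in>aff_carrier.
        \<rho> (pbw i j k) (aff_bracket br B x y)
        = aff_sum {(a, b, c). a \<le> i \<and> b \<le> j \<and> c \<le> k}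
            (\<lambda>(a, b, c). aff_bracket br B (\<rho> (pbw a b c) x) (\<rho> (pbw (i - a) (j - b) (k - c)) y)))"
proof -
  have VS: "vector_space scale" using assms(3) unfolding lie_algebra_with_form_def by (rule conjunct1)
  interpret V: vector_space scale by (rule VS)
  have kc: "(aff_k :: ('g, 'k) aff) \<in> aff_carrier" by (simp add: aff_k_def aff_carrier_def)
  have lc: "(aff_loop a n :: ('g, 'k) aff) \<in> aff_carrier" for a :: 'g and n
  proof -
    have "{m. fst (aff_loop a n :: ('g, 'k) aff) m \<noteq> 0} \<subseteq> {n}" by (auto simp: aff_loop_def)
    hence "finite {m. fst (aff_loop a n :: ('g, 'k) aff) m \<noteq> 0}" by (rule finite_subset) simp
    thus ?thesis by (simp add: aff_carrier_def)
  qed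
  have k1: "rho scale (L_m1_div r) aff_k = aff_scale scale (if r = 0 then 1 else 0) aff_k" for r
    unfolding V.rho_X[OF kc] by (simp add: shop_def aff_k_def aff_scale_def edel_def)
  have k2: "rho scale (L_1_div r) aff_k = aff_scale scale (if r = 0 then 1 else 0) aff_k" for r
    unfolding V.rho_Z[OF kc] by (simp add: shop_def aff_k_def aff_scale_def edel_def)
  have k3: "rho scale (L_0_div r) aff_k = aff_scale scale (if r = 0 then 1 else 0) aff_k" for r
    unfolding V.rho_Y[OF kc] by (simp add: shop_def aff_k_def aff_scale_def edel_def)
  have l1: "rho scale (L_m1_div r) (aff_loop a n)
        = aff_scale scale (of_int ((-1) ^ r * (ibinom n r))) (aff_loop a (n - int r))" for r a n
    unfolding V.rho_X[OF lc] by (auto simp: shop_def aff_loop_def aff_scale_def cX_def simp del: of_int_mult of_int_power)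
  have l2: "rho scale (L_1_div r) (aff_loop a n)
        = aff_scale scale (of_int (ibinom (- n) r)) (aff_loop a (n + int r))" for r a n
    unfolding V.rho_Z[OF lc] by (auto simp: shop_def aff_loop_def aff_scale_def cZ_def)
  have l3: "rho scale (L_0_div r) (aff_loop a n)
        = aff_scale scale (of_int (ibinom (2 * n) r)) (aff_loop a n)" for r a n
    unfolding V.rho_Y[OF lc] by (auto simp: shop_def aff_loop_def aff_scale_def cY_def)
  show ?thesis
    apply (rule exI[of _ "rho scale"])
    apply (intro conjI)
    subgoal by (intro ballI, rule V.rho_carrier[OF G_UZ])
    subgoal by (intro ballI, rule V.rho_add)
    subgoal by (intro ballI allI, rule V.rho_scale)
    subgoal by (intro ballI, rule V.rho_uadd[OF G_UZ G_UZ])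
    subgoal by (intro ballI, rule V.rho_umult[OF G_UZ G_UZ])
    subgoal by (intro ballI, rule V.rho_uone)
    subgoal by (intro allI, rule k1)
    subgoal by (intro allI, rule k2)
    subgoal by (intro allI, rule k3)
    subgoal by (intro allI, rule l1)
    subgoal by (intro allI, rule l2)
    subgoal by (intro allI, rule l3)
    subgoal by (intro allI ballI, rule V.pbw_compat[OF assms(3)])
    done
qed

end
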